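(* Let $T$ be a triangulation of the oriented 2-sphere (a simplicial complex) with $N+3$ vertices and $3N+3$ edges, and let $\mathcal E_0\subset\mathcal E(T)$ be a set of $2N$ edges whose complement is a cycle-rooted spanning tree of $T$ with a cycle of odd length. Then the $2N\times 2N$ matrix $E_0=(E_{e,e'})_{e,e'\in\mathcal E_0}$ (rows and columns in the same order) satisfies $\det E_0=1$.
   Context: $E_{e,e'}$: if $e\neq e'$ lie in a common face whose edges in positive cyclic order are $\{a,b\},\{b,c\},\{c,a\}$, then $E_{e,e'}=-1$ if $e'$ immediately follows $e$ and $+1$ if $e'$ immediately precedes $e$; otherwise $E_{e,e'}=0$. A cycle-rooted spanning tree is a connected spanning subgraph with as many edges as vertices. *)

theory Defs
  imports "Jordan_Normal_Form.Determinant"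
begin

text \<open>An oriented triangulated surface is given by a finite vertex set V and a set F of
  oriented triangles (a,b,c), meaning the face {a,b,c} with positive cyclic order
  a -> b -> c.\<close>

definition tri_edges :: "('a \<times> 'a \<times> 'a) set \<Rightarrow> 'a set set" where
  "tri_edges F = {{a, b} | a b c. (a, b, c) \<in> F}"

definition oriented_sphere_triangulation ::
  "'a set \<Rightarrow> ('a \<times> 'a \<times> 'a) set \<Rightarrow> bool" where
  "oriented_sphere_triangulation V F \<longleftrightarrow>
     finite V \<and> V \<noteq> {} \<and> F \<subseteq> V \<times> V \<times> V
     \<comment> \<open>faces are genuine triangles, listed with all cyclic rotations\<close>
     \<and> (\<forall>a b c. (a, b, c) \<in> F \<longrightarrow> a \<noteq> b \<and> b \<noteq> c \<and> a \<noteq> c \<and> (b, c, a) \<in> F)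
     \<comment> \<open>simplicial complex: a 3-set carries at most one (oriented) face\<close>
     \<and> (\<forall>a b c. (a, b, c) \<in> F \<longrightarrow> (a, c, b) \<notin> F)
     \<comment> \<open>every vertex lies in a face (pure 2-dimensional complex)\<close>
     \<and> (\<forall>v\<in>V. \<exists>b c. (v, b, c) \<in> F)
     \<comment> \<open>closed and consistently oriented: every directed edge of an edge lies in
         exactly one positively oriented face (so each edge lies in exactly two faces,
         inducing opposite orientations)\<close>
     \<and> (\<forall>a b. {a, b} \<in> tri_edges F \<longrightarrow> (\<exists>!c. (a, b, c) \<in> F))
     \<comment> \<open>manifold condition: the link of every vertex is a single cycle\<close>
     \<and> (\<forall>v\<in>V. \<forall>a b. {v, a} \<in> tri_edges F \<longrightarrow> {v, b} \<in> tri_edges F \<longrightarrow>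
           (a, b) \<in> ({(x, y). (v, x, y) \<in> F})\<^sup>*)
     \<comment> \<open>connected\<close>
     \<and> (\<forall>u\<in>V. \<forall>w\<in>V. (u, w) \<in> ({(x, y). {x, y} \<in> tri_edges F})\<^sup>*)
     \<comment> \<open>Euler characteristic 2 (V - E + F = 2; F counted as unoriented faces)\<close>
     \<and> int (card V) - int (card (tri_edges F)) + int (card F div 3) = 2"

definition Eentry :: "('a \<times> 'a \<times> 'a) set \<Rightarrow> 'a set \<Rightarrow> 'a set \<Rightarrow> int" where
  "Eentry F e e' =
    (if \<exists>a b c. (a, b, c) \<in> F \<and> e = {a, b} \<and> e' = {b, c} then -1
     else if \<exists>a b c. (a, b, c) \<in> F \<and> e = {b, c} \<and> e' = {a, b} then 1
     else 0)"

definition is_cycle :: "'a set set \<Rightarrow> 'a list \<Rightarrow> bool" where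
  "is_cycle H vs \<longleftrightarrow> length vs \<ge> 3 \<and> distinct vs \<and>
     (\<forall>i < length vs. {vs ! i, vs ! ((i + 1) mod length vs)} \<in> H)"

definition spanning_connected :: "'a set \<Rightarrow> 'a set set \<Rightarrow> bool" where
  "spanning_connected V H \<longleftrightarrow>
     (\<forall>u\<in>V. \<forall>w\<in>V. (u, w) \<in> ({(x, y). {x, y} \<in> H})\<^sup>*)"

definition cycle_rooted_spanning_tree :: "'a set \<Rightarrow> 'a set set \<Rightarrow> 'a set set \<Rightarrow> bool" where
  "cycle_rooted_spanning_tree V EG H \<longleftrightarrow>
     H \<subseteq> EG \<and> spanning_connected V H \<and> card H = card V"

end

theory Submission
  imports Defs "Jordan_Normal_Form.Char_Poly"
begin


lemma det_mod_cong:
  fixes A B :: "int mat"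
  assumes A: "A \<in> carrier_mat n n" and B: "B \<in> carrier_mat n n"
    and c: "\<And>i j. i<n \<Longrightarrow> j<n \<Longrightarrow> A$$(i,j) mod p = B$$(i,j) mod p"
  shows "det A mod p = det B mod p"
proof -
  have pr: "(\<Prod>i=0..<n. A$$(i,\<sigma> i)) mod p = (\<Prod>i=0..<n. B$$(i,\<sigma> i)) mod p"
    if s: "\<sigma> permutes {0..<n}" for \<sigma>
  proof -
    have "(\<Prod>i=0..<n. A$$(i,\<sigma> i)) mod p = (\<Prod>i=0..<n. A$$(i,\<sigma> i) mod p) mod p"
      by (simp add: mod_prod_eq)
    also have "\<dots> = (\<Prod>i=0..<n. B$$(i,\<sigma> i) mod p) mod p"
      by (rule arg_cong[where f="\<lambda>x. x mod p"], rule prod.cong, simp,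
          rule c, simp, metis atLeastLessThan_iff permutes_in_image s)
    also have "\<dots> = (\<Prod>i=0..<n. B$$(i,\<sigma> i)) mod p" by (simp add: mod_prod_eq)
    finally show ?thesis .
  qed
  have "det A mod p = (\<Sum>\<sigma>\<in>{\<sigma>. \<sigma> permutes {0..<n}}. (signof \<sigma> * (\<Prod>i=0..<n. A$$(i,\<sigma> i))) mod p) mod p"
    by (simp add: det_def'[OF A] mod_sum_eq)
  also have "\<dots> = (\<Sum>\<sigma>\<in>{\<sigma>. \<sigma> permutes {0..<n}}. (signof \<sigma> * (\<Prod>i=0..<n. B$$(i,\<sigma> i))) mod p) mod p"
  proof (rule arg_cong[where f="\<lambda>x. x mod p"], rule sum.cong)
    fix \<sigma> assume "\<sigma> \<in> {\<sigma>. \<sigma> permutes {0..<n}}"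
    hence "(\<Prod>i=0..<n. A$$(i,\<sigma> i)) mod p = (\<Prod>i=0..<n. B$$(i,\<sigma> i)) mod p" using pr by simp
    thus "(signof \<sigma> * (\<Prod>i=0..<n. A$$(i,\<sigma> i))) mod p = (signof \<sigma> * (\<Prod>i=0..<n. B$$(i,\<sigma> i))) mod p"
      by (metis mod_mult_right_eq)
  qed simp
  also have "\<dots> = det B mod p" by (simp add: det_def'[OF B] mod_sum_eq)
  finally show ?thesis .
qed

definition modinj :: "int \<Rightarrow> nat \<Rightarrow> (nat \<Rightarrow> nat \<Rightarrow> int) \<Rightarrow> bool" where
  "modinj p n a \<longleftrightarrow> (\<forall>x. (\<forall>i<n. p dvd (\<Sum>j<n. a i j * x j)) \<longrightarrow> (\<forall>j<n. p dvd x j))"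

lemma mod_unique_int: fixes u v p :: int
  assumes "0 \<le> u" "u < p" "0 \<le> v" "v < p" "p dvd u - v" shows "u = v"
proof -
  have "u mod p = v mod p" using assms(5) by (simp add: mod_eq_dvd_iff)
  thus ?thesis using assms by simp
qed

lemma modinj_det:
  fixes p :: int
  assumes p: "prime p" and inj: "modinj p n a"
  shows "\<not> p dvd det (mat n n (\<lambda>(i,j). a i j))"
proof
  assume dv: "p dvd det (mat n n (\<lambda>(i,j). a i j))"
  have p1: "p > 1" using p prime_gt_1_int by blast
  define D where "D = {x::nat\<Rightarrow>int. (\<forall>i<n. 0 \<le> x i \<and> x i < p) \<and> (\<forall>i\<ge>n. x i = 0)}"
  have "D \<subseteq> (\<lambda>xs i. if i<n then xs!i else 0) ` {xs. set xs \<subseteq> {0..<p} \<and> length xs = n}"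
  proof
    fix x assume x: "x \<in> D"
    show "x \<in> (\<lambda>xs i. if i<n then xs!i else 0) ` {xs. set xs \<subseteq> {0..<p} \<and> length xs = n}"
    proof
      show "x = (\<lambda>i. if i<n then (map x [0..<n])!i else 0)" using x unfolding D_def
        by (auto intro!: ext)
      show "map x [0..<n] \<in> {xs. set xs \<subseteq> {0..<p} \<and> length xs = n}" using x unfolding D_def
        by auto
    qed
  qed
  moreover have "finite {xs. set xs \<subseteq> {0..<p} \<and> length xs = n}"
    by (rule finite_lists_length_eq) simp
  ultimately have finD: "finite D" by (meson finite_imageI finite_subset)
  define g where "g x = (\<lambda>i. if i<n then (\<Sum>j<n. a i j * x j) mod p else 0)" for x :: "nat \<Rightarrow> int"
  have gD: "g ` D \<subseteq> D" using p1 unfolding D_def g_def by auto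
  have ginj: "inj_on g D"
  proof
    fix x y assume x: "x \<in> D" and y: "y \<in> D" and e: "g x = g y"
    have "\<forall>i<n. p dvd (\<Sum>j<n. a i j * (x j - y j))"
    proof (intro allI impI)
      fix i assume i: "i < n"
      have "(\<Sum>j<n. a i j * x j) mod p = (\<Sum>j<n. a i j * y j) mod p"
        using fun_cong[OF e, of i] i unfolding g_def by simp
      hence "p dvd (\<Sum>j<n. a i j * x j) - (\<Sum>j<n. a i j * y j)" by (simp add: mod_eq_dvd_iff)
      thus "p dvd (\<Sum>j<n. a i j * (x j - y j))"
        by (simp add: sum_subtractf right_diff_distrib)
    qed
    hence d: "\<forall>j<n. p dvd x j - y j"
      using inj[unfolded modinj_def, THEN spec, of "\<lambda>j. x j - y j"] by simp
    show "x = y"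
    proof
      fix j show "x j = y j"
      proof (cases "j < n")
        case True
        hence "p dvd x j - y j" using d by simp
        moreover have "0 \<le> x j" "x j < p" "0 \<le> y j" "y j < p" using x y True unfolding D_def by auto
        ultimately show ?thesis using mod_unique_int by blast
      next
        case False thus ?thesis using x y unfolding D_def by auto
      qed
    qed
  qed
  have surj: "g ` D = D" using endo_inj_surj[OF finD gD ginj] .
  define del where "del k = (\<lambda>i. if i = k then (1::int) else 0)" for k :: nat
  have "\<exists>x. x \<in> D \<and> g x = del k" if k: "k < n" for k
  proof -
    have "del k \<in> D" using p1 k unfolding D_def del_def by auto
    hence "del k \<in> g ` D" using surj by simp
    then obtain x where "x \<in> D" "del k = g x" by (rule imageE)
    thus ?thesis by metis
  qed
  hence "\<forall>k. \<exists>x. k < n \<longrightarrow> x \<in> D \<and> g x = del k" by meson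
  then obtain X where X0: "\<forall>k. k < n \<longrightarrow> X k \<in> D \<and> g (X k) = del k" using choice[of "\<lambda>k x. k < n \<longrightarrow> x \<in> D \<and> g x = del k"] by blast
  have X: "\<And>k. k < n \<Longrightarrow> X k \<in> D \<and> g (X k) = del k" using X0 by blast
  define A where "A = mat n n (\<lambda>(i,j). a i j)"
  define XM where "XM = mat n n (\<lambda>(j,k). X k j)"
  have A: "A \<in> carrier_mat n n" and XM: "XM \<in> carrier_mat n n" unfolding A_def XM_def by auto
  have "det (A * XM) mod p = det (1\<^sub>m n) mod p"
  proof (rule det_mod_cong[of _ n])
    show "A * XM \<in> carrier_mat n n" using A XM by auto
    show "1\<^sub>m n \<in> carrier_mat n n" by auto
    fix i k assume i: "i < n" and k: "k < n"
    have "(A * XM) $$ (i,k) = (\<Sum>j<n. a i j * X k j)"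
      using i k unfolding A_def XM_def
      by (simp add: scalar_prod_def lessThan_atLeast0 row_def col_def)
    also have "\<dots> mod p = del k i"
    proof -
      have "g (X k) i = del k i" using X[OF k] by simp
      thus ?thesis using i unfolding g_def by simp
    qed
    also have "\<dots> = 1\<^sub>m n $$ (i,k) mod p" using i k p1 unfolding del_def by auto
    finally show "(A * XM) $$ (i,k) mod p = 1\<^sub>m n $$ (i,k) mod p" .
  qed
  moreover have "det (A * XM) = det A * det XM" by (rule det_mult[OF A XM])
  ultimately have "(det A * det XM) mod p = 1" using p1 by simp
  moreover have "p dvd det A * det XM" using dv unfolding A_def by simp
  ultimately show False using p1 by simp
qed

lemma det_modinj:
  fixes p :: int
  assumes p: "prime p" and nd: "\<not> p dvd det (mat n n (\<lambda>(i,j). a i j))"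
  shows "modinj p n a"
  unfolding modinj_def
proof (intro allI impI)
  fix x :: "nat \<Rightarrow> int" and j assume h: "\<forall>i<n. p dvd (\<Sum>j<n. a i j * x j)" and j: "j < n"
  define A where "A = mat n n (\<lambda>(i,j). a i j)"
  have A: "A \<in> carrier_mat n n" unfolding A_def by auto
  define xv where "xv = vec n x"
  have xv: "xv \<in> carrier_vec n" unfolding xv_def by auto
  have Ax: "(A *\<^sub>v xv) $ i = (\<Sum>j<n. a i j * x j)" if "i < n" for i
    using that unfolding A_def xv_def
    by (simp add: scalar_prod_def lessThan_atLeast0 row_def)
  have "(adj_mat A * A) *\<^sub>v xv = adj_mat A *\<^sub>v (A *\<^sub>v xv)"
    using adj_mat(1)[OF A] A xv by (simp add: assoc_mult_mat_vec)
  hence "(det A \<cdot>\<^sub>m 1\<^sub>m n) *\<^sub>v xv = adj_mat A *\<^sub>v (A *\<^sub>v xv)" using adj_mat(3)[OF A] by simp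
  hence "((det A \<cdot>\<^sub>m 1\<^sub>m n) *\<^sub>v xv) $ j = (adj_mat A *\<^sub>v (A *\<^sub>v xv)) $ j" by simp
  moreover have "((det A \<cdot>\<^sub>m 1\<^sub>m n) *\<^sub>v xv) $ j = det A * x j"
    using j xv unfolding xv_def by simp
  moreover have "p dvd (adj_mat A *\<^sub>v (A *\<^sub>v xv)) $ j"
  proof -
    have "(adj_mat A *\<^sub>v (A *\<^sub>v xv)) $ j = (\<Sum>k\<in>{0..<n}. row (adj_mat A) j $ k * (A *\<^sub>v xv) $ k)"
      using j adj_mat(1)[OF A] A by (simp add: scalar_prod_def)
    also have "p dvd \<dots>" using h Ax by (intro dvd_sum) simp
    finally show ?thesis .
  qed
  ultimately have "p dvd det A * x j" by simp
  thus "p dvd x j" using nd p unfolding A_def by (simp add: prime_dvd_mult_iff)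
qed

lemma modinj_transpose:
  fixes p :: int
  assumes p: "prime p" and m: "modinj p n a"
  shows "modinj p n (\<lambda>i j. a j i)"
proof -
  have "det (mat n n (\<lambda>(i,j). a j i)) = det (transpose_mat (mat n n (\<lambda>(i,j). a i j)))"
    by (rule arg_cong[where f=det]) (auto intro!: eq_matI)
  also have "\<dots> = det (mat n n (\<lambda>(i,j). a i j))" by (rule det_transpose) auto
  finally show ?thesis using modinj_det[OF p m] det_modinj[OF p] by metis
qed

lemma det_int_unit:
  fixes d :: int assumes "\<And>p. prime p \<Longrightarrow> \<not> p dvd d" shows "d = 1 \<or> d = -1"
proof -
  have "\<not> (\<bar>d\<bar> > 1)"
  proof
    assume "\<bar>d\<bar> > 1"
    then obtain p where "prime p" "p dvd \<bar>d\<bar>" using prime_factor_int[of "\<bar>d\<bar>"] by auto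
    thus False using assms by simp
  qed
  moreover have "d \<noteq> 0" using assms[of 2] by auto
  ultimately show ?thesis by linarith
qed


lemma skew_det_nonneg:
  fixes a :: "nat \<Rightarrow> nat \<Rightarrow> int"
  assumes sk: "\<And>i j. i<n \<Longrightarrow> j<n \<Longrightarrow> a j i = - a i j"
  shows "det (mat n n (\<lambda>(i,j). a i j)) \<ge> 0"
proof (rule ccontr)
  assume neg: "\<not> ?thesis"
  define R where "R = mat n n (\<lambda>(i,j). real_of_int (a i j))"
  have R: "R \<in> carrier_mat n n" unfolding R_def by auto
  have "R = map_mat real_of_int (mat n n (\<lambda>(i,j). a i j))" unfolding R_def by (auto intro!: eq_matI)
  hence detR: "det R = real_of_int (det (mat n n (\<lambda>(i,j). a i j)))" by (simp add: of_int_hom.hom_det)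
  define M where "M t = mat n n (\<lambda>(i,j). (if i = j then t else 0) + real_of_int (a i j))" for t :: real
  have MC: "M t \<in> carrier_mat n n" for t unfolding M_def by auto
  have polyM: "poly (char_poly (-R)) t = det (M t)" for t
    unfolding char_poly_def
    by (rule poly_det_cong[of _ n], auto simp: char_poly_matrix_def M_def R_def)
  have "M 0 = R" unfolding M_def R_def by (auto intro!: eq_matI)
  hence p0: "poly (char_poly (-R)) 0 < 0" using polyM[of 0] detR neg by simp
  have "degree (char_poly (-R)) = n \<and> coeff (char_poly (-R)) n = 1"
    by (rule degree_monic_char_poly) (use R in auto)
  hence lc: "lead_coeff (char_poly (-R)) = 1" by simp
  have pos: "lead_coeff (char_poly (-R)) > 0" using lc by simp
  obtain T where T0: "\<forall>x\<ge>T. poly (char_poly (-R)) x \<ge> lead_coeff (char_poly (-R))"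
    using poly_pinfty_gt_lc[OF pos] by blast
  have T: "\<forall>x\<ge>T. poly (char_poly (-R)) x \<ge> 1" using T0[unfolded lc] .
  define b where "b = max T 1"
  have "b \<ge> T" unfolding b_def by simp
  hence "poly (char_poly (-R)) b \<ge> 1" using T by blast
  hence "poly (char_poly (-R)) b > 0" by linarith
  moreover have "(0::real) < b" unfolding b_def by simp
  ultimately obtain t where t: "0 < t" "poly (char_poly (-R)) t = 0" using poly_IVT_pos[OF _ p0] by blast
  hence "det (M t) = 0" using polyM by simp
  then obtain v where v: "v \<in> carrier_vec n" "v \<noteq> 0\<^sub>v n" "M t *\<^sub>v v = 0\<^sub>v n"
    using det_0_iff_vec_prod_zero[OF MC] by blast
  have Mv: "(M t *\<^sub>v v) $ i = t * v $ i + (\<Sum>j<n. real_of_int (a i j) * v $ j)" if i: "i < n" for i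
  proof -
    have "(M t *\<^sub>v v) $ i = (\<Sum>j<n. ((if i = j then t else 0) + real_of_int (a i j)) * v $ j)"
      using i v(1) unfolding M_def by (simp add: scalar_prod_def row_def lessThan_atLeast0)
    also have "\<dots> = (\<Sum>j<n. (if i = j then t else 0) * v $ j) + (\<Sum>j<n. real_of_int (a i j) * v $ j)"
      by (simp add: sum.distrib[symmetric] distrib_right)
    also have "(\<Sum>j<n. (if i = j then t else 0) * v $ j) = (\<Sum>j<n. if i = j then t * v $ i else 0)"
      by (rule sum.cong) auto
    also have "\<dots> = t * v $ i" using i by simp
    finally show ?thesis .
  qed
  define S where "S = (\<Sum>i<n. \<Sum>j<n. v $ i * (real_of_int (a i j) * v $ j))"
  have "S = (\<Sum>j<n. \<Sum>i<n. v $ i * (real_of_int (a i j) * v $ j))" unfolding S_def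
    by (rule sum.swap[where g="\<lambda>i j. v $ i * (real_of_int (a i j) * v $ j)" and A="{..<n}" and B="{..<n}"])
  also have "\<dots> = (\<Sum>j<n. \<Sum>i<n. - (v $ j * (real_of_int (a j i) * v $ i)))"
  proof (intro sum.cong refl)
    fix j i assume "j \<in> {..<n}" "i \<in> {..<n}"
    thus "v $ i * (real_of_int (a i j) * v $ j) = - (v $ j * (real_of_int (a j i) * v $ i))"
      using sk[of i j] by simp
  qed
  also have "\<dots> = - S" unfolding S_def by (simp add: sum_negf)
  finally have S0: "S = 0" by simp
  have "0 = (\<Sum>i<n. v $ i * (M t *\<^sub>v v) $ i)" using v(3) by simp
  also have "\<dots> = (\<Sum>i<n. t * (v $ i * v $ i) + v $ i * (\<Sum>j<n. real_of_int (a i j) * v $ j))"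
    by (intro sum.cong refl) (simp add: Mv algebra_simps)
  also have "\<dots> = t * (\<Sum>i<n. v $ i * v $ i) + S"
    unfolding S_def by (simp add: sum.distrib sum_distrib_left)
  finally have "t * (\<Sum>i<n. v $ i * v $ i) = 0" using S0 by simp
  hence ss: "(\<Sum>i<n. v $ i * v $ i) = 0" using t by simp
  have "\<forall>i\<in>{..<n}. v $ i * v $ i = 0"
    using sum_nonneg_eq_0_iff[of "{..<n}" "\<lambda>i. v $ i * v $ i"] ss by simp
  hence "v = 0\<^sub>v n" using v(1) by (auto intro!: eq_vecI)
  thus False using v(2) by simp
qed


definition sd :: "'x set \<Rightarrow> 'x set \<Rightarrow> 'x set" where
  "sd X Y = (X - Y) \<union> (Y - X)"

lemma sd_trans: "sd (sd {a} {b}) (sd {b} {c}) = sd {a} {c}"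
  unfolding sd_def by auto
lemma sd_self[simp]: "sd X X = {}" unfolding sd_def by auto
lemma sd_empty[simp]: "sd X {} = X" "sd {} X = X" unfolding sd_def by auto
lemma sd_inv: "sd X (sd X Y) = Y" unfolding sd_def by auto
lemma sd_sub: "X \<subseteq> A \<Longrightarrow> Y \<subseteq> A \<Longrightarrow> sd X Y \<subseteq> A" unfolding sd_def by auto
lemma sd_comm: "sd X Y = sd Y X" unfolding sd_def by auto
lemma sd_assoc: "sd (sd X Y) Z = sd X (sd Y Z)" unfolding sd_def by auto

lemma card_sd: assumes "finite X" "finite Y"
  shows "card (sd X Y) + 2 * card (X \<inter> Y) = card X + card Y"
proof -
  have "sd X Y = (X \<union> Y) - (X \<inter> Y)" unfolding sd_def by auto
  moreover have "card ((X \<union> Y) - (X \<inter> Y)) = card (X \<union> Y) - card (X \<inter> Y)"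
    by (rule card_Diff_subset) (use assms in auto)
  moreover have "card (X \<union> Y) + card (X \<inter> Y) = card X + card Y" using assms by (rule card_Un_Int[symmetric])
  moreover have "card (X \<inter> Y) \<le> card (X \<union> Y)" by (rule card_mono) (use assms in auto)
  ultimately show ?thesis by simp
qed

lemma odd_card_sd: assumes "finite X" "finite Y"
  shows "odd (card (sd X Y)) \<longleftrightarrow> (odd (card X) \<noteq> odd (card Y))"
  using card_sd[OF assms] by presburger

definition parmap :: "'y set \<Rightarrow> ('x \<Rightarrow> 'y \<Rightarrow> bool) \<Rightarrow> 'x set \<Rightarrow> 'y set" where
  "parmap B inc Z = {y\<in>B. odd (card {x\<in>Z. inc x y})}"

lemma parmap_hom: assumes "finite X" "finite Y"
  shows "parmap B inc (sd X Y) = sd (parmap B inc X) (parmap B inc Y)"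
proof -
  have "odd (card {x\<in>sd X Y. inc x y}) \<longleftrightarrow> (odd (card {x\<in>X. inc x y}) \<noteq> odd (card {x\<in>Y. inc x y}))" for y
  proof -
    have "{x\<in>sd X Y. inc x y} = sd {x\<in>X. inc x y} {x\<in>Y. inc x y}" unfolding sd_def by auto
    thus ?thesis using odd_card_sd[of "{x\<in>X. inc x y}" "{x\<in>Y. inc x y}"] assms by simp
  qed
  thus ?thesis unfolding parmap_def sd_def by auto
qed

lemma parmap_sub: "parmap B inc Z \<subseteq> B" unfolding parmap_def by auto

lemma hom_count:
  fixes \<phi> :: "'x set \<Rightarrow> 'y set"
  assumes finA: "finite A"
    and hom: "\<And>X Y. X \<subseteq> A \<Longrightarrow> Y \<subseteq> A \<Longrightarrow> \<phi> (sd X Y) = sd (\<phi> X) (\<phi> Y)"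
  shows "card (Pow A) = card (\<phi> ` Pow A) * card {X \<in> Pow A. \<phi> X = {}}"
proof -
  define K where "K = {X \<in> Pow A. \<phi> X = {}}"
  define fib where "fib y = {X \<in> Pow A. \<phi> X = y}" for y
  have finP: "finite (Pow A)" using finA by simp
  have U: "Pow A = (\<Union>y\<in>\<phi> ` Pow A. fib y)" unfolding fib_def by auto
  have cf: "card (fib y) = card K" if y: "y \<in> \<phi> ` Pow A" for y
  proof -
    obtain X0 where X0: "X0 \<subseteq> A" "\<phi> X0 = y" using y by auto
    have "fib y = (sd X0) ` K"
    proof
      show "fib y \<subseteq> sd X0 ` K"
      proof
        fix X assume X: "X \<in> fib y"
        hence XA: "X \<subseteq> A" "\<phi> X = y" unfolding fib_def by auto
        have "sd X0 X \<in> K" unfolding K_def using hom[OF X0(1) XA(1)] X0 XA sd_sub[OF X0(1) XA(1)] by simp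
        moreover have "X = sd X0 (sd X0 X)" by (simp add: sd_inv)
        ultimately show "X \<in> sd X0 ` K" by blast
      qed
      show "sd X0 ` K \<subseteq> fib y"
      proof
        fix X assume "X \<in> sd X0 ` K"
        then obtain Q where Q: "Q \<in> K" "X = sd X0 Q" by blast
        hence QA: "Q \<subseteq> A" "\<phi> Q = {}" unfolding K_def by auto
        show "X \<in> fib y" unfolding fib_def using hom[OF X0(1) QA(1)] QA X0 Q(2) sd_sub[OF X0(1) QA(1)] by simp
      qed
    qed
    moreover have "inj_on (sd X0) K" by (metis inj_onI sd_inv)
    ultimately show ?thesis by (simp add: card_image)
  qed
  have "card (Pow A) = card (\<Union>y\<in>\<phi> ` Pow A. fib y)" by (rule arg_cong[where f=card, OF U])
  also have "\<dots> = (\<Sum>y\<in>\<phi> ` Pow A. card (fib y))"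
    by (rule card_UN_disjoint) (use finP in \<open>auto simp: fib_def\<close>)
  also have "\<dots> = (\<Sum>y\<in>\<phi> ` Pow A. card K)" using cf by simp
  finally show ?thesis unfolding K_def by simp
qed

lemma even_count: assumes fin: "finite S" and ne: "S \<noteq> {}"
  shows "2 * card {W\<in>Pow S. even (card W)} = 2 ^ card S"
proof -
  obtain s where s: "s \<in> S" using ne by blast
  define Ev where "Ev = {W\<in>Pow S. even (card W)}"
  define Od where "Od = {W\<in>Pow S. odd (card W)}"
  have cflip: "odd (card (sd W {s})) \<longleftrightarrow> even (card W)" if "W \<subseteq> S" for W
    using odd_card_sd[of W "{s}"] that fin finite_subset by auto
  have "Od = sd {s} ` Ev"
  proof
    show "Od \<subseteq> sd {s} ` Ev"
    proof
      fix W assume W: "W \<in> Od"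
      have WS: "W \<subseteq> S" "odd (card W)" using W unfolding Od_def by auto
      have "sd {s} W \<subseteq> S" using sd_sub[of "{s}" S W] WS s by auto
      moreover have "even (card (sd {s} W))" using cflip[OF WS(1)] WS(2) by (simp add: sd_comm)
      ultimately have "sd {s} W \<in> Ev" unfolding Ev_def by simp
      moreover have "W = sd {s} (sd {s} W)" by (simp add: sd_inv)
      ultimately show "W \<in> sd {s} ` Ev" by blast
    qed
    show "sd {s} ` Ev \<subseteq> Od"
    proof
      fix W assume "W \<in> sd {s} ` Ev"
      then obtain Q where Q: "Q \<in> Ev" "W = sd {s} Q" by blast
      have QS: "Q \<subseteq> S" "even (card Q)" using Q unfolding Ev_def by auto
      have "sd {s} Q \<subseteq> S" using sd_sub[of "{s}" S Q] QS s by auto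
      moreover have "odd (card (sd {s} Q))" using cflip[OF QS(1)] QS(2) by (simp add: sd_comm)
      ultimately show "W \<in> Od" unfolding Od_def using Q(2) by simp
    qed
  qed
  moreover have "inj_on (sd {s}) Ev" by (metis inj_onI sd_inv)
  ultimately have cO: "card Od = card Ev" by (simp add: card_image)
  have "Pow S = Ev \<union> Od" "Ev \<inter> Od = {}" unfolding Ev_def Od_def by auto
  moreover have "finite Ev" "finite Od" unfolding Ev_def Od_def using fin by auto
  ultimately have "card (Pow S) = card Ev + card Od" by (metis card_Un_disjoint)
  thus ?thesis using cO fin unfolding Ev_def by (simp add: card_Pow)
qed

lemma even_in_img:
  fixes \<phi> :: "'x set \<Rightarrow> 'y set"
  assumes hom: "\<And>X Y. X \<subseteq> A \<Longrightarrow> Y \<subseteq> A \<Longrightarrow> \<phi> (sd X Y) = sd (\<phi> X) (\<phi> Y)"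
    and pairs: "\<And>u w. u \<in> B \<Longrightarrow> w \<in> B \<Longrightarrow> sd {u} {w} \<in> \<phi> ` Pow A"
  shows "finite W \<Longrightarrow> W \<subseteq> B \<Longrightarrow> even (card W) \<Longrightarrow> W \<in> \<phi> ` Pow A"
proof (induction "card W" arbitrary: W rule: less_induct)
  case less
  have cl: "sd P Q \<in> \<phi> ` Pow A" if hP: "P \<in> \<phi> ` Pow A" and hQ: "Q \<in> \<phi> ` Pow A" for P Q
  proof -
    obtain X Y where "X \<subseteq> A" "Y \<subseteq> A" "P = \<phi> X" "Q = \<phi> Y" using hP hQ by auto
    thus ?thesis using hom sd_sub by (metis Pow_iff image_eqI)
  qed
  show ?case
  proof (cases "W = {}")
    case True
    have "\<phi> {} = {}" using hom[of "{}" "{}"] by simp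
    hence "{} \<in> \<phi> ` Pow A" by (metis Pow_bottom image_eqI)
    thus ?thesis using True by simp
  next
    case False
    then obtain u where u: "u \<in> W" by blast
    have "card W \<noteq> 1" using less.prems by auto
    have "W - {u} \<noteq> {}"
    proof
      assume "W - {u} = {}"
      hence "W = {u}" using u by auto
      thus False using \<open>card W \<noteq> 1\<close> by simp
    qed
    then obtain w where w: "w \<in> W" "w \<noteq> u" by blast
    define W' where "W' = W - {u,w}"
    have cW': "card W' = card W - 2" unfolding W'_def using u w less.prems(1) by (simp add: card_Diff_subset)
    have "{u,w} \<subseteq> W" using u w by auto
    hence "card {u,w} \<le> card W" using less.prems(1) by (rule card_mono[rotated])
    hence "card W \<ge> 2" using w by simp
    hence lt: "card W' < card W" using cW' by simp
    have "W' \<in> \<phi> ` Pow A" using less.hyps[OF lt] less.prems cW' unfolding W'_def by auto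
    moreover have "sd {u} {w} \<in> \<phi> ` Pow A" using pairs u w less.prems by blast
    ultimately have "sd W' (sd {u} {w}) \<in> \<phi> ` Pow A" by (rule cl)
    moreover have "sd W' (sd {u} {w}) = W" unfolding W'_def sd_def using u w by auto
    ultimately show ?thesis by simp
  qed
qed

lemma ker_bound:
  fixes \<phi> :: "'x set \<Rightarrow> 'y set"
  assumes finA: "finite A" and finB: "finite B" and neB: "B \<noteq> {}"
    and hom: "\<And>X Y. X \<subseteq> A \<Longrightarrow> Y \<subseteq> A \<Longrightarrow> \<phi> (sd X Y) = sd (\<phi> X) (\<phi> Y)"
    and pairs: "\<And>u w. u \<in> B \<Longrightarrow> w \<in> B \<Longrightarrow> sd {u} {w} \<in> \<phi> ` Pow A"
  shows "card {X \<in> Pow A. \<phi> X = {}} * 2 ^ card B \<le> 2 * 2 ^ card A"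
proof -
  have sub: "{W\<in>Pow B. even (card W)} \<subseteq> \<phi> ` Pow A"
    using even_in_img[OF hom pairs] finB finite_subset by blast
  have "card {W\<in>Pow B. even (card W)} \<le> card (\<phi> ` Pow A)"
    using sub finA by (simp add: card_mono)
  hence "2 ^ card B \<le> 2 * card (\<phi> ` Pow A)" using even_count[OF finB neB] by linarith
  hence "card {X \<in> Pow A. \<phi> X = {}} * 2 ^ card B \<le> card {X \<in> Pow A. \<phi> X = {}} * (2 * card (\<phi> ` Pow A))"
    by simp
  also have "\<dots> = 2 * card (Pow A)" using hom_count[OF finA hom] by simp
  finally show ?thesis using finA by (simp add: card_Pow)
qed


definition opp :: "('a \<times> 'a \<times> 'a) set \<Rightarrow> 'a \<Rightarrow> 'a \<Rightarrow> 'a" where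
  "opp F a b = (THE c. (a,b,c) \<in> F)"

locale tri =
  fixes V :: "'a set" and F :: "('a \<times> 'a \<times> 'a) set"
  assumes osT: "oriented_sphere_triangulation V F"
begin

abbreviation "EE \<equiv> tri_edges F"

lemma finV: "finite V" using osT unfolding oriented_sphere_triangulation_def by blast
lemma Vne: "V \<noteq> {}" using osT unfolding oriented_sphere_triangulation_def by blast
lemma FV: "F \<subseteq> V \<times> V \<times> V" using osT unfolding oriented_sphere_triangulation_def by blast
lemma rot: "(a,b,c)\<in>F \<Longrightarrow> (b,c,a)\<in>F" using osT unfolding oriented_sphere_triangulation_def by blast
lemma dist: "(a,b,c)\<in>F \<Longrightarrow> a\<noteq>b \<and> b\<noteq>c \<and> a\<noteq>c" using osT unfolding oriented_sphere_triangulation_def by blast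
lemma norefl: "(a,b,c)\<in>F \<Longrightarrow> (a,c,b) \<notin> F" using osT unfolding oriented_sphere_triangulation_def by blast
lemma uniq: "{a,b}\<in>EE \<Longrightarrow> \<exists>!c. (a,b,c)\<in>F" using osT unfolding oriented_sphere_triangulation_def by blast
lemma vface: "v\<in>V \<Longrightarrow> \<exists>b c. (v,b,c)\<in>F" using osT unfolding oriented_sphere_triangulation_def by blast
lemma link: "v\<in>V \<Longrightarrow> {v,a}\<in>EE \<Longrightarrow> {v,b}\<in>EE \<Longrightarrow> (a,b) \<in> ({(x,y). (v,x,y)\<in>F})\<^sup>*"
  using osT unfolding oriented_sphere_triangulation_def by blast
lemma conn: "u\<in>V \<Longrightarrow> w\<in>V \<Longrightarrow> (u,w) \<in> ({(x,y). {x,y}\<in>EE})\<^sup>*"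
  using osT unfolding oriented_sphere_triangulation_def by blast
lemma euler: "int (card V) - int (card EE) + int (card F div 3) = 2"
  using osT unfolding oriented_sphere_triangulation_def by blast

lemma finF: "finite F" using finV FV by (meson finite_SigmaI finite_subset)
lemma EE_img: "EE = (\<lambda>(a,b,c). {a,b}) ` F" unfolding tri_edges_def by force
lemma finEE: "finite EE" using finF EE_img by simp

lemma rot2: "(a,b,c)\<in>F \<Longrightarrow> (c,a,b)\<in>F" using rot by blast
lemma inV: "(a,b,c)\<in>F \<Longrightarrow> a\<in>V \<and> b\<in>V \<and> c\<in>V" using FV by auto

lemma edgeI: "(a,b,c)\<in>F \<Longrightarrow> {a,b}\<in>EE" unfolding tri_edges_def by blast
lemma edges_face: "(a,b,c)\<in>F \<Longrightarrow> {a,b}\<in>EE \<and> {b,c}\<in>EE \<and> {c,a}\<in>EE"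
  using edgeI rot by blast
lemma EE_cases: "e\<in>EE \<Longrightarrow> \<exists>a b c. (a,b,c)\<in>F \<and> e = {a,b}" unfolding tri_edges_def by blast

lemma opp_eq: "(a,b,c)\<in>F \<Longrightarrow> opp F a b = c"
proof -
  assume h: "(a,b,c)\<in>F"
  have "\<exists>!c. (a,b,c)\<in>F" using uniq[OF edgeI[OF h]] .
  thus ?thesis unfolding opp_def by (rule the1_equality) (rule h)
qed
lemma opp_in: "{a,b}\<in>EE \<Longrightarrow> (a,b,opp F a b)\<in>F"
proof -
  assume h: "{a,b}\<in>EE"
  obtain c where "(a,b,c)\<in>F" using uniq[OF h] by blast
  thus ?thesis using opp_eq by simp
qed
lemma edge_sym: "{a,b}\<in>EE \<Longrightarrow> {b,a}\<in>EE" by (simp add: insert_commute)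

lemma opp_ne: assumes "{a,b}\<in>EE" shows "opp F a b \<noteq> opp F b a"
proof
  assume e: "opp F a b = opp F b a"
  have "(a,b,opp F a b)\<in>F" using opp_in assms by blast
  moreover have "(b,a,opp F a b)\<in>F" using opp_in[OF edge_sym[OF assms]] e by simp
  hence "(a,opp F a b,b)\<in>F" using rot by blast
  ultimately show False using norefl by blast
qed

lemma c1_iff: assumes E: "{a,b}\<in>EE"
  shows "(\<exists>a' b' c'. (a',b',c')\<in>F \<and> {a,b} = {a',b'} \<and> e' = {b',c'})
      \<longleftrightarrow> (e' = {b, opp F a b} \<or> e' = {a, opp F b a})"
proof
  assume "\<exists>a' b' c'. (a',b',c')\<in>F \<and> {a,b} = {a',b'} \<and> e' = {b',c'}"
  then obtain a' b' c' where h: "(a',b',c')\<in>F" "{a,b} = {a',b'}" "e' = {b',c'}" by blast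
  from h(2) have "(a=a' \<and> b=b') \<or> (a=b' \<and> b=a')" by (simp add: doubleton_eq_iff)
  thus "e' = {b, opp F a b} \<or> e' = {a, opp F b a}"
    using h opp_eq by blast
next
  assume "e' = {b, opp F a b} \<or> e' = {a, opp F b a}"
  thus "\<exists>a' b' c'. (a',b',c')\<in>F \<and> {a,b} = {a',b'} \<and> e' = {b',c'}"
  proof
    assume "e' = {b, opp F a b}" thus ?thesis using opp_in[OF E] by blast
  next
    assume "e' = {a, opp F b a}" thus ?thesis using opp_in[OF edge_sym[OF E]]
      by (metis insert_commute)
  qed
qed

lemma c2_iff: assumes E: "{a,b}\<in>EE"
  shows "(\<exists>a' b' c'. (a',b',c')\<in>F \<and> {a,b} = {b',c'} \<and> e' = {a',b'})
      \<longleftrightarrow> (e' = {opp F a b, a} \<or> e' = {opp F b a, b})"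
proof
  assume "\<exists>a' b' c'. (a',b',c')\<in>F \<and> {a,b} = {b',c'} \<and> e' = {a',b'}"
  then obtain a' b' c' where h: "(a',b',c')\<in>F" "{a,b} = {b',c'}" "e' = {a',b'}" by blast
  from h(2) have "(a=b' \<and> b=c') \<or> (a=c' \<and> b=b')" by (simp add: doubleton_eq_iff)
  moreover have "(b',c',a')\<in>F" using rot h(1) by blast
  ultimately show "e' = {opp F a b, a} \<or> e' = {opp F b a, b}"
    using h opp_eq by blast
next
  assume "e' = {opp F a b, a} \<or> e' = {opp F b a, b}"
  thus "\<exists>a' b' c'. (a',b',c')\<in>F \<and> {a,b} = {b',c'} \<and> e' = {a',b'}"
  proof
    assume "e' = {opp F a b, a}" thus ?thesis using rot2[OF opp_in[OF E]] by blast
  next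
    assume "e' = {opp F b a, b}" thus ?thesis using rot2[OF opp_in[OF edge_sym[OF E]]]
      by (metis insert_commute)
  qed
qed

lemma diam_distinct: assumes E: "{a,b}\<in>EE"
  shows "a \<noteq> b" "opp F a b \<noteq> a" "opp F a b \<noteq> b" "opp F b a \<noteq> a" "opp F b a \<noteq> b"
    "opp F a b \<noteq> opp F b a"
  using dist[OF opp_in[OF E]] dist[OF opp_in[OF edge_sym[OF E]]] opp_ne[OF E] by auto

lemma Eentry_val: assumes E: "{a,b}\<in>EE"
  shows "Eentry F {a,b} e' =
    (if e' = {b, opp F a b} \<or> e' = {a, opp F b a} then -1
     else if e' = {opp F a b, a} \<or> e' = {opp F b a, b} then 1 else 0)"
  unfolding Eentry_def c1_iff[OF E] c2_iff[OF E] by simp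

definition dia :: "('a set \<Rightarrow> int) \<Rightarrow> 'a \<Rightarrow> 'a \<Rightarrow> int" where
  "dia X a b = X {opp F a b, a} + X {opp F b a, b} - X {b, opp F a b} - X {a, opp F b a}"

lemma Esum: assumes E: "{a,b}\<in>EE"
  shows "(\<Sum>e'\<in>EE. Eentry F {a,b} e' * X e') = dia X a b"
proof -
  define c where "c = opp F a b"
  define d where "d = opp F b a"
  have ds: "a \<noteq> b" "c \<noteq> a" "c \<noteq> b" "d \<noteq> a" "d \<noteq> b" "c \<noteq> d"
    using diam_distinct[OF E] unfolding c_def d_def by auto
  have q: "{c,a}\<in>EE" "{d,b}\<in>EE" "{b,c}\<in>EE" "{a,d}\<in>EE"
    using edges_face[OF opp_in[OF E]] edges_face[OF opp_in[OF edge_sym[OF E]]]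
    unfolding c_def d_def by (auto simp: insert_commute)
  have nq: "{c,a} \<noteq> {d,b}" "{c,a} \<noteq> {b,c}" "{c,a} \<noteq> {a,d}" "{d,b} \<noteq> {b,c}"
    "{d,b} \<noteq> {a,d}" "{b,c} \<noteq> {a,d}"
    using ds by (auto simp: doubleton_eq_iff)
  have pt: "Eentry F {a,b} e' * X e' =
     (if e' = {c,a} then X {c,a} else 0) + (if e' = {d,b} then X {d,b} else 0)
     - (if e' = {b,c} then X {b,c} else 0) - (if e' = {a,d} then X {a,d} else 0)" for e'
    unfolding Eentry_val[OF E] c_def[symmetric] d_def[symmetric] using nq by auto
  have "(\<Sum>e'\<in>EE. Eentry F {a,b} e' * X e') =
     (\<Sum>e'\<in>EE. (if e' = {c,a} then X {c,a} else 0)) + (\<Sum>e'\<in>EE. (if e' = {d,b} then X {d,b} else 0))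
     - (\<Sum>e'\<in>EE. (if e' = {b,c} then X {b,c} else 0)) - (\<Sum>e'\<in>EE. (if e' = {a,d} then X {a,d} else 0))"
    unfolding pt by (simp add: sum.distrib sum_subtractf)
  also have "\<dots> = dia X a b"
    unfolding dia_def c_def[symmetric] d_def[symmetric] using q finEE by (simp add: sum.delta')
  finally show ?thesis .
qed


lemma C12_disj: assumes E: "e\<in>EE"
  shows "\<not> ((\<exists>a' b' c'. (a',b',c')\<in>F \<and> e = {a',b'} \<and> e' = {b',c'}) \<and>
            (\<exists>a' b' c'. (a',b',c')\<in>F \<and> e = {b',c'} \<and> e' = {a',b'}))"
proof -
  obtain a b c where abc: "(a,b,c)\<in>F" "e = {a,b}" using EE_cases[OF E] by blast
  have E': "{a,b}\<in>EE" using E abc by simp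
  have ds: "a \<noteq> b" "opp F a b \<noteq> a" "opp F a b \<noteq> b" "opp F b a \<noteq> a" "opp F b a \<noteq> b"
    "opp F a b \<noteq> opp F b a" using diam_distinct[OF E'] by auto
  show ?thesis unfolding abc(2)
  proof
    assume h: "(\<exists>a' b' c'. (a',b',c')\<in>F \<and> {a,b} = {a',b'} \<and> e' = {b',c'}) \<and>
            (\<exists>a' b' c'. (a',b',c')\<in>F \<and> {a,b} = {b',c'} \<and> e' = {a',b'})"
    have "e' = {b, opp F a b} \<or> e' = {a, opp F b a}" using c1_iff[OF E', THEN iffD1, OF conjunct1[OF h]] .
    moreover have "e' = {opp F a b, a} \<or> e' = {opp F b a, b}" using c2_iff[OF E', THEN iffD1, OF conjunct2[OF h]] .
    moreover have "{b, opp F a b} \<noteq> {opp F a b, a}" "{b, opp F a b} \<noteq> {opp F b a, b}"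
      "{a, opp F b a} \<noteq> {opp F a b, a}" "{a, opp F b a} \<noteq> {opp F b a, b}"
    proof -
      define c where "c = opp F a b"
      define d where "d = opp F b a"
      have "a \<noteq> b" "c \<noteq> a" "c \<noteq> b" "d \<noteq> a" "d \<noteq> b" "c \<noteq> d" using ds unfolding c_def d_def by auto
      hence "{b, c} \<noteq> {c, a}" "{b, c} \<noteq> {d, b}" "{a, d} \<noteq> {c, a}" "{a, d} \<noteq> {d, b}"
        by (auto simp: doubleton_eq_iff)
      thus "{b, opp F a b} \<noteq> {opp F a b, a}" "{b, opp F a b} \<noteq> {opp F b a, b}"
      "{a, opp F b a} \<noteq> {opp F a b, a}" "{a, opp F b a} \<noteq> {opp F b a, b}" unfolding c_def d_def .
    qed
    ultimately show False by metis
  qed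
qed

lemma Eskew: assumes "e\<in>EE" shows "Eentry F e' e = - Eentry F e e'"
proof -
  define P where "P = (\<exists>a' b' c'. (a',b',c')\<in>F \<and> e = {a',b'} \<and> e' = {b',c'})"
  define Q where "Q = (\<exists>a' b' c'. (a',b',c')\<in>F \<and> e = {b',c'} \<and> e' = {a',b'})"
  have d: "\<not> (P \<and> Q)" using C12_disj[OF assms, of e'] unfolding P_def Q_def .
  have 1: "(\<exists>a b c. (a,b,c)\<in>F \<and> e' = {a,b} \<and> e = {b,c}) = Q" unfolding Q_def by blast
  have 2: "(\<exists>a b c. (a,b,c)\<in>F \<and> e' = {b,c} \<and> e = {a,b}) = P" unfolding P_def by blast
  have 3: "Eentry F e e' = (if P then -1 else if Q then 1 else 0)" unfolding Eentry_def P_def Q_def ..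
  have 4: "Eentry F e' e = (if Q then -1 else if P then 1 else 0)" unfolding Eentry_def 1 2 ..
  show ?thesis unfolding 3 4 using d by auto
qed

definition Emul :: "('a set \<Rightarrow> int) \<Rightarrow> 'a set \<Rightarrow> int" where
  "Emul X e = (\<Sum>e'\<in>EE. Eentry F e e' * X e')"

lemma Emul_dia: "{a,b}\<in>EE \<Longrightarrow> Emul X {a,b} = dia X a b"
  unfolding Emul_def by (rule Esum)

lemma orth: assumes W: "\<forall>e'\<in>EE. Emul W e' = 0"
  shows "(\<Sum>e\<in>EE. W e * Emul X e) = 0"
proof -
  have "(\<Sum>e\<in>EE. W e * Emul X e) = (\<Sum>e\<in>EE. \<Sum>e'\<in>EE. W e * (Eentry F e e' * X e'))"
    unfolding Emul_def by (simp add: sum_distrib_left)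
  also have "\<dots> = (\<Sum>e'\<in>EE. \<Sum>e\<in>EE. W e * (Eentry F e e' * X e'))"
    by (rule sum.swap)
  also have "\<dots> = (\<Sum>e'\<in>EE. - (X e' * Emul W e'))"
  proof (rule sum.cong[OF refl])
    fix e' assume e': "e' \<in> EE"
    have "(\<Sum>e\<in>EE. W e * (Eentry F e e' * X e')) = (\<Sum>e\<in>EE. - (X e' * (Eentry F e' e * W e)))"
      by (rule sum.cong[OF refl]) (simp add: Eskew[OF e'])
    also have "\<dots> = - (X e' * Emul W e')" unfolding Emul_def by (simp add: sum_negf sum_distrib_left)
    finally show "(\<Sum>e\<in>EE. W e * (Eentry F e e' * X e')) = - (X e' * Emul W e')" .
  qed
  also have "\<dots> = 0" using W by simp
  finally show ?thesis .
qed

lemma Emul_ind: "\<forall>e'\<in>EE. Emul (\<lambda>e. if v \<in> e then 1 else 0) e' = 0"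
proof
  fix e' assume e': "e'\<in>EE"
  obtain a b c where abc: "(a,b,c)\<in>F" "e' = {a,b}" using EE_cases[OF e'] by blast
  have E': "{a,b}\<in>EE" using e' abc by simp
  have ds: "a \<noteq> b" "opp F a b \<noteq> a" "opp F a b \<noteq> b" "opp F b a \<noteq> a" "opp F b a \<noteq> b"
    "opp F a b \<noteq> opp F b a" using diam_distinct[OF E'] by auto
  show "Emul (\<lambda>e. if v \<in> e then 1 else 0) e' = 0"
    unfolding abc(2) Emul_dia[OF E'] dia_def using ds by auto
qed

lemma Emul_one: "\<forall>e'\<in>EE. Emul (\<lambda>e. 1) e' = 0"
proof
  fix e' assume e': "e'\<in>EE"
  obtain a b c where abc: "(a,b,c)\<in>F" "e' = {a,b}" using EE_cases[OF e'] by blast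
  have E': "{a,b}\<in>EE" using e' abc by simp
  show "Emul (\<lambda>e. 1) e' = 0" unfolding abc(2) Emul_dia[OF E'] dia_def by simp
qed

lemma vsum0: "(\<Sum>e\<in>{e\<in>EE. v \<in> e}. Emul X e) = 0"
proof -
  have "(\<Sum>e\<in>{e\<in>EE. v \<in> e}. Emul X e) = (\<Sum>e\<in>EE. (if v \<in> e then 1 else 0) * Emul X e)"
  proof -
    have "(\<Sum>e\<in>{e\<in>EE. v \<in> e}. Emul X e) = (\<Sum>e\<in>EE. if v \<in> e then Emul X e else 0)"
      using finEE by (simp add: sum.inter_filter)
    also have "\<dots> = (\<Sum>e\<in>EE. (if v \<in> e then 1 else 0) * Emul X e)" by (rule sum.cong) auto
    finally show ?thesis .
  qed
  also have "\<dots> = 0" by (rule orth[OF Emul_ind])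
  finally show ?thesis .
qed

lemma tsum0: "(\<Sum>e\<in>EE. Emul X e) = 0"
  using orth[OF Emul_one, of X] by simp

definition Pp :: "('a set \<Rightarrow> int) \<Rightarrow> 'a \<Rightarrow> 'a \<Rightarrow> 'a \<Rightarrow> int" where
  "Pp X a x y = X {a,x} + X {y,a} - X {x,y}"

lemma Pp_step: assumes "(a,x,y)\<in>F" "(a,y,z)\<in>F" shows "Pp X a x y - Pp X a y z = - Emul X {a,y}"
proof -
  have E: "{a,y}\<in>EE" using edges_face[OF assms(2)] by blast
  have "opp F a y = z" using opp_eq assms(2) by blast
  moreover have "opp F y a = x" using opp_eq rot[OF rot[OF assms(1)]] by blast
  ultimately show ?thesis unfolding Emul_dia[OF E] dia_def Pp_def by (simp add: insert_commute)
qed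

lemma localpot:
  assumes h: "\<forall>e\<in>EE. (p::int) dvd Emul X e"
  shows "\<exists>\<psi>. \<forall>a b. {a,b}\<in>EE \<longrightarrow> p dvd 2 * X{a,b} - \<psi> a - \<psi> b"
proof -
  define x0 where "x0 a = (SOME x. \<exists>y. (a,x,y)\<in>F)" for a
  define \<psi> where "\<psi> a = Pp X a (x0 a) (opp F a (x0 a))" for a
  have face_pot: "p dvd Pp X a x y - \<psi> a" if f: "(a,x,y)\<in>F" for a x y
  proof -
    have aV: "a\<in>V" using inV f by blast
    have "\<exists>x y. (a,x,y)\<in>F" using f by blast
    hence "\<exists>y. (a, x0 a, y)\<in>F" unfolding x0_def by (metis (mono_tags, lifting) someI_ex)
    then obtain y0 where y0: "(a, x0 a, y0)\<in>F" by blast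
    have e0: "{a, x0 a}\<in>EE" using edges_face[OF y0] by blast
    have e1: "{a, x}\<in>EE" using edges_face[OF f] by blast
    have "(x0 a, x) \<in> ({(u,w). (a,u,w)\<in>F})\<^sup>*" using link[OF aV e0 e1] .
    hence "{a,x}\<in>EE \<longrightarrow> p dvd Pp X a x (opp F a x) - \<psi> a"
    proof (induction rule: rtrancl_induct)
      case base show ?case unfolding \<psi>_def by simp
    next
      case (step u w)
      have uw: "(a,u,w)\<in>F" using step(2) by simp
      have ou: "opp F a u = w" using opp_eq uw by blast
      have ew: "{a,w}\<in>EE" using edges_face[OF uw] by (simp add: insert_commute)
      have f2: "(a,w,opp F a w)\<in>F" using opp_in[OF ew] .
      have eu: "{a,u}\<in>EE" using edges_face[OF uw] by blast
      have "p dvd Pp X a u (opp F a u) - \<psi> a" using step(3) eu by simp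
      moreover have "p dvd Pp X a u w - Pp X a w (opp F a w)"
        using Pp_step[OF uw f2] h ew by simp
      ultimately have "p dvd (Pp X a u w - \<psi> a) - (Pp X a u w - Pp X a w (opp F a w))"
        using ou by (metis dvd_diff)
      thus ?case by simp
    qed
    thus ?thesis using e1 opp_eq[OF f] by simp
  qed
  have "p dvd 2 * X{a,b} - \<psi> a - \<psi> b" if E: "{a,b}\<in>EE" for a b
  proof -
    define c where "c = opp F a b"
    have f1: "(a,b,c)\<in>F" unfolding c_def by (rule opp_in[OF E])
    have f2: "(b,c,a)\<in>F" using rot[OF f1] .
    have "p dvd (Pp X a b c - \<psi> a) + (Pp X b c a - \<psi> b)"
      using face_pot[OF f1] face_pot[OF f2] by simp
    moreover have "Pp X a b c + Pp X b c a = 2 * X{a,b}" unfolding Pp_def by (simp add: insert_commute)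
    ultimately show ?thesis by (simp add: algebra_simps)
  qed
  thus ?thesis by blast
qed

end

lemma cycle_alt:
  fixes \<phi> :: "'a \<Rightarrow> int"
  assumes cyc: "is_cycle H vs" and edges: "\<And>a b. {a,b}\<in>H \<Longrightarrow> p dvd \<phi> a + \<phi> b"
    and i: "i < length vs"
  shows "p dvd \<phi> (vs!i) - (-1)^i * \<phi> (vs!0)"
  using i
proof (induction i)
  case 0 show ?case by simp
next
  case (Suc i)
  have k: "Suc i < length vs" using Suc by simp
  have h: "\<forall>j<length vs. {vs!j, vs!(Suc j mod length vs)} \<in> H" using cyc unfolding is_cycle_def by simp
  have "{vs!i, vs!(Suc i mod length vs)} \<in> H" using k by (intro h[rule_format]) simp
  moreover have "Suc i mod length vs = Suc i" using k by simp
  ultimately have "{vs!i, vs!(Suc i)} \<in> H" by simp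
  hence "p dvd \<phi> (vs!i) + \<phi> (vs!Suc i)" using edges by blast
  moreover have "p dvd \<phi> (vs!i) - (-1)^i * \<phi> (vs!0)" using Suc k by simp
  ultimately have "p dvd (\<phi> (vs!i) + \<phi> (vs!Suc i)) - (\<phi> (vs!i) - (-1)^i * \<phi> (vs!0))"
    by (rule dvd_diff)
  thus ?case by (simp add: algebra_simps)
qed

lemma oddcycle_zero:
  fixes \<phi> :: "'a \<Rightarrow> int" and p :: int
  assumes p: "prime p" "odd p"
    and edges: "\<And>a b. {a,b}\<in>H \<Longrightarrow> p dvd \<phi> a + \<phi> b"
    and sc: "spanning_connected V H" and cyc: "is_cycle H vs" and odd: "odd (length vs)"
    and vsV: "vs!0 \<in> V"
  shows "\<forall>v\<in>V. p dvd \<phi> v"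
proof -
  define k where "k = length vs"
  have k3: "k \<ge> 3" using cyc unfolding is_cycle_def k_def by simp
  have "p dvd \<phi> (vs!(k-1)) - (-1)^(k-1) * \<phi> (vs!0)"
    using cycle_alt[where \<phi>=\<phi> and p=p and i="k-1", OF cyc edges] k3 unfolding k_def by simp
  moreover have "even (k-1)" using odd k3 unfolding k_def by simp
  ultimately have d1: "p dvd \<phi> (vs!(k-1)) - \<phi> (vs!0)" by simp
  have h: "\<forall>j<k. {vs!j, vs!(Suc j mod k)} \<in> H" using cyc unfolding is_cycle_def k_def by simp
  have "{vs!(k-1), vs!(Suc (k-1) mod k)} \<in> H" using k3 by (intro h[rule_format]) simp
  moreover have "Suc (k-1) mod k = 0" using k3 by simp
  ultimately have "{vs!(k-1), vs!0} \<in> H" by simp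
  hence d2: "p dvd \<phi> (vs!(k-1)) + \<phi> (vs!0)" using edges by blast
  have "p dvd (\<phi> (vs!(k-1)) + \<phi> (vs!0)) - (\<phi> (vs!(k-1)) - \<phi> (vs!0))" using d1 d2 by (rule dvd_diff[rotated])
  hence "p dvd 2 * \<phi> (vs!0)" by simp
  moreover have "\<not> p dvd 2"
  proof
    assume "p dvd 2"
    hence "p \<le> 2" by (simp add: zdvd_imp_le)
    moreover have "p \<ge> 2" using p prime_ge_2_int by blast
    ultimately have "p = 2" by simp
    thus False using p by simp
  qed
  ultimately have z0: "p dvd \<phi> (vs!0)" using p by (simp add: prime_dvd_mult_iff)
  show ?thesis
  proof
    fix v assume v: "v\<in>V"
    have "(vs!0, v) \<in> ({(x,y). {x,y}\<in>H})\<^sup>*" using sc vsV v unfolding spanning_connected_def by blast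
    thus "p dvd \<phi> v"
    proof (induction rule: rtrancl_induct)
      case base show ?case using z0 .
    next
      case (step y z)
      have "p dvd \<phi> y + \<phi> z" using edges step(2) by simp
      hence "p dvd (\<phi> y + \<phi> z) - \<phi> y" using step(3) by (rule dvd_diff)
      thus ?case by simp
    qed
  qed
qed

lemma conn_const:
  assumes sc: "spanning_connected V H" and edges: "\<And>a b. {a,b}\<in>H \<Longrightarrow> P a \<longleftrightarrow> P b"
    and u: "u\<in>V" and w: "w\<in>V"
  shows "P u \<longleftrightarrow> P w"
proof -
  have "(u, w) \<in> ({(x,y). {x,y}\<in>H})\<^sup>*" using sc u w unfolding spanning_connected_def by blast
  thus ?thesis by (induction rule: rtrancl_induct) (use edges in auto)
qed


lemma cnt_insert: assumes "finite A" "x \<notin> A"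
  shows "card {e\<in>insert x A. P e} = (if P x then 1 else 0) + card {e\<in>A. P e}"
proof (cases "P x")
  case True
  hence "{e\<in>insert x A. P e} = insert x {e\<in>A. P e}" by auto
  thus ?thesis using True assms by simp
next
  case False
  hence "{e\<in>insert x A. P e} = {e\<in>A. P e}" by auto
  thus ?thesis using False by simp
qed

lemma cnt1: "card {e\<in>{x}. P e} = (if P x then 1 else 0)"
proof (cases "P x")
  case True hence "{e\<in>{x}. P e} = {x}" by auto
  thus ?thesis using True by simp
next
  case False hence "{e\<in>{x}. P e} = {}" by auto
  thus ?thesis using False by simp
qed

lemma cnt2: assumes "x \<noteq> y" shows "card {e\<in>{x,y}. P e} = (if P x then 1 else 0) + (if P y then 1 else 0)"
  using cnt_insert[where A="{y}" and x=x and P=P] assms cnt1[where P=P and x=y] by simp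

lemma cnt3: assumes "x \<noteq> y" "x \<noteq> z" "y \<noteq> z"
  shows "card {e\<in>{x,y,z}. P e} = (if P x then 1 else 0) + (if P y then 1 else 0) + (if P z then 1 else 0)"
  using cnt_insert[where A="{y,z}" and x=x and P=P] assms cnt2[where x=y and y=z and P=P] by simp


context tri begin

definition FF :: "'a set set" where "FF = (\<lambda>(a,b,c). {a,b,c}) ` F"

lemma FFI: "(a,b,c)\<in>F \<Longrightarrow> {a,b,c}\<in>FF" unfolding FF_def by force
lemma FF_cases: "t\<in>FF \<Longrightarrow> \<exists>a b c. (a,b,c)\<in>F \<and> t = {a,b,c}" unfolding FF_def by auto
lemma finFF: "finite FF" unfolding FF_def using finF by simp

lemma pair_cases:
  assumes "a \<in> {x,y,z}" "b \<in> {x,y,z}" "a \<noteq> b"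
  obtains "a=x" "b=y" | "a=y" "b=z" | "a=z" "b=x" | "a=y" "b=x" | "a=z" "b=y" | "a=x" "b=z"
  using assms by auto

lemma face_edges: assumes f: "(a,b,c)\<in>F"
  shows "{e\<in>EE. e \<subseteq> {a,b,c}} = {{a,b},{b,c},{c,a}}"
proof
  show "{{a,b},{b,c},{c,a}} \<subseteq> {e\<in>EE. e \<subseteq> {a,b,c}}" using edges_face[OF f] by auto
  show "{e\<in>EE. e \<subseteq> {a,b,c}} \<subseteq> {{a,b},{b,c},{c,a}}"
  proof
    fix e assume e: "e \<in> {e\<in>EE. e \<subseteq> {a,b,c}}"
    then obtain x y z where xyz: "(x,y,z)\<in>F" "e = {x,y}" using EE_cases by blast
    have xy: "x \<noteq> y" using dist[OF xyz(1)] by simp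
    have "x \<in> {a,b,c}" "y \<in> {a,b,c}" using e xyz(2) by auto
    thus "e \<in> {{a,b},{b,c},{c,a}}"
      by (rule pair_cases[OF _ _ xy]) (auto simp: xyz(2) insert_commute)
  qed
qed

lemma face_edges_distinct: assumes f: "(a,b,c)\<in>F"
  shows "{a,b} \<noteq> {b,c}" "{a,b} \<noteq> {c,a}" "{b,c} \<noteq> {c,a}"
  using dist[OF f] by (auto simp: doubleton_eq_iff)

lemma faces_of_edge: assumes E: "{a,b}\<in>EE"
  shows "{t\<in>FF. {a,b} \<subseteq> t} = {{a,b,opp F a b},{a,b,opp F b a}}"
proof
  show "{{a,b,opp F a b},{a,b,opp F b a}} \<subseteq> {t\<in>FF. {a,b} \<subseteq> t}"
  proof -
    have 1: "{a,b,opp F a b} \<in> FF" by (rule FFI[OF opp_in[OF E]])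
    have "{b,a,opp F b a} \<in> FF" by (rule FFI[OF opp_in[OF edge_sym[OF E]]])
    moreover have "{b,a,opp F b a} = {a,b,opp F b a}" by (rule insert_commute)
    ultimately have 2: "{a,b,opp F b a} \<in> FF" by simp
    show ?thesis
    proof
      fix t assume "t \<in> {{a,b,opp F a b},{a,b,opp F b a}}"
      hence "t = {a,b,opp F a b} \<or> t = {a,b,opp F b a}" by blast
      thus "t \<in> {t\<in>FF. {a,b} \<subseteq> t}" using 1 2 by blast
    qed
  qed
  show "{t\<in>FF. {a,b} \<subseteq> t} \<subseteq> {{a,b,opp F a b},{a,b,opp F b a}}"
  proof
    fix t assume t: "t \<in> {t\<in>FF. {a,b} \<subseteq> t}"
    have tFF: "t \<in> FF" and abt: "{a,b} \<subseteq> t" using t by simp_all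
    obtain x y z where xyz: "(x,y,z)\<in>F" "t = {x,y,z}" using FF_cases[OF tFF] by blast
    have r1: "(y,z,x)\<in>F" using rot[OF xyz(1)] .
    have r2: "(z,x,y)\<in>F" using rot[OF r1] .
    have ab: "a \<noteq> b" using diam_distinct[OF E] by simp
    have "a \<in> {x,y,z}" "b \<in> {x,y,z}" using abt xyz(2) by simp_all
    hence "t = {a,b,opp F a b} \<or> t = {a,b,opp F b a}"
    proof (rule pair_cases[OF _ _ ab])
      assume h: "a=x" "b=y"
      hence "opp F a b = z" using opp_eq[OF xyz(1)] by simp
      thus ?thesis using xyz(2) h by simp
    next
      assume h: "a=y" "b=z"
      hence "opp F a b = x" using opp_eq[OF r1] by simp
      moreover have "{x,y,z} = {y,z,x}" by blast
      ultimately show ?thesis using xyz(2) h by simp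
    next
      assume h: "a=z" "b=x"
      hence "opp F a b = y" using opp_eq[OF r2] by simp
      moreover have "{x,y,z} = {z,x,y}" by blast
      ultimately show ?thesis using xyz(2) h by simp
    next
      assume h: "a=y" "b=x"
      hence "opp F b a = z" using opp_eq[OF xyz(1)] by simp
      moreover have "{x,y,z} = {y,x,z}" by blast
      ultimately show ?thesis using xyz(2) h by simp
    next
      assume h: "a=z" "b=y"
      hence "opp F b a = x" using opp_eq[OF r1] by simp
      moreover have "{x,y,z} = {z,y,x}" by blast
      ultimately show ?thesis using xyz(2) h by simp
    next
      assume h: "a=x" "b=z"
      hence "opp F b a = y" using opp_eq[OF r2] by simp
      moreover have "{x,y,z} = {x,z,y}" by blast
      ultimately show ?thesis using xyz(2) h by simp
    qed
    thus "t \<in> {{a,b,opp F a b},{a,b,opp F b a}}" by blast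
  qed
qed

lemma two_faces_ne: assumes E: "{a,b}\<in>EE"
  shows "{a,b,opp F a b} \<noteq> {a,b,opp F b a}"
proof
  assume h: "{a,b,opp F a b} = {a,b,opp F b a}"
  have ds: "opp F a b \<noteq> a" "opp F a b \<noteq> b" "opp F a b \<noteq> opp F b a" using diam_distinct[OF E] by auto
  have "opp F a b \<in> {a,b,opp F b a}" using h by blast
  thus False using ds by auto
qed

lemma same_face: assumes "(x,y,z)\<in>F" "(x,b,c)\<in>F" "{x,y,z} = {x,b,c}"
  shows "y = b \<and> z = c"
proof -
  have d1: "x \<noteq> y" "y \<noteq> z" "x \<noteq> z" and d2: "x \<noteq> b" "b \<noteq> c" "x \<noteq> c" using dist assms(1,2) by blast+
  have "y \<in> {x,b,c}" "z \<in> {x,b,c}" using assms(3) by blast+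
  hence yb: "y = b \<or> y = c" and zb: "z = b \<or> z = c" using d1 by auto
  show ?thesis
  proof (cases "y = b")
    case True thus ?thesis using opp_eq assms(1,2) by metis
  next
    case False
    hence "y = c" "z = b" using yb zb d1 by auto
    thus ?thesis using norefl assms(1,2) by blast
  qed
qed

lemma fiber: assumes f: "(a,b,c)\<in>F"
  shows "{p\<in>F. (\<lambda>(x,y,z). {x,y,z}) p = {a,b,c}} = {(a,b,c),(b,c,a),(c,a,b)}"
proof
  have r1: "(b,c,a)\<in>F" and r2: "(c,a,b)\<in>F" using rot f by blast+
  show "{(a,b,c),(b,c,a),(c,a,b)} \<subseteq> {p\<in>F. (\<lambda>(x,y,z). {x,y,z}) p = {a,b,c}}"
    using f r1 r2 by (auto simp: insert_commute)
  show "{p\<in>F. (\<lambda>(x,y,z). {x,y,z}) p = {a,b,c}} \<subseteq> {(a,b,c),(b,c,a),(c,a,b)}"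
  proof
    fix p assume p: "p \<in> {p\<in>F. (\<lambda>(x,y,z). {x,y,z}) p = {a,b,c}}"
    obtain x y z where pxyz: "p = (x,y,z)" by (cases p) auto
    have xyz: "(x,y,z)\<in>F" "{x,y,z} = {a,b,c}" using p pxyz by auto
    consider "x = a" | "x = b" | "x = c" using xyz(2) by blast
    thus "p \<in> {(a,b,c),(b,c,a),(c,a,b)}"
    proof cases
      case 1
      hence "y = b \<and> z = c" using same_face[of x y z b c] xyz f by simp
      thus ?thesis using pxyz 1 by simp
    next
      case 2
      have "{x,y,z} = {x,c,a}" using xyz(2) 2 by auto
      hence "y = c \<and> z = a" using same_face[of x y z c a] xyz(1) r1 2 by simp
      thus ?thesis using pxyz 2 by simp
    next
      case 3
      have "{x,y,z} = {x,a,b}" using xyz(2) 3 by auto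
      hence "y = a \<and> z = b" using same_face[of x y z a b] xyz(1) r2 3 by simp
      thus ?thesis using pxyz 3 by simp
    qed
  qed
qed

lemma card_F: "card F = 3 * card FF"
proof -
  define g :: "'a \<times> 'a \<times> 'a \<Rightarrow> 'a set" where "g = (\<lambda>(x,y,z). {x,y,z})"
  have U: "F = (\<Union>t\<in>FF. {p\<in>F. g p = t})" unfolding FF_def g_def by auto
  have "card F = card (\<Union>t\<in>FF. {p\<in>F. g p = t})" by (rule arg_cong[where f=card, OF U])
  also have "\<dots> = (\<Sum>t\<in>FF. card {p\<in>F. g p = t})"
    by (rule card_UN_disjoint) (use finFF finF in auto)
  also have "\<dots> = (\<Sum>t\<in>FF. 3)"
  proof (rule sum.cong[OF refl])
    fix t assume "t \<in> FF"
    then obtain a b c where abc: "(a,b,c)\<in>F" "t = {a,b,c}" using FF_cases by blast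
    have "{p\<in>F. g p = t} = {(a,b,c),(b,c,a),(c,a,b)}" using fiber[OF abc(1)] abc(2) unfolding g_def by simp
    moreover have "card {(a,b,c),(b,c,a),(c,a,b)} = 3" using dist[OF abc(1)] by auto
    ultimately show "card {p\<in>F. g p = t} = 3" by simp
  qed
  finally show ?thesis by simp
qed

lemma eul: "card EE + 2 = card V + card FF"
  using euler card_F by simp

lemma dual_const:
  assumes inv: "\<And>a b. {a,b}\<in>EE \<Longrightarrow> Q {a,b,opp F a b} = Q {a,b,opp F b a}"
    and t: "t\<in>FF" and t': "t'\<in>FF"
  shows "Q t = Q t'"
proof -
  have atv: "Q {v,x,y} = Q {v,x',y'}" if f1: "(v,x,y)\<in>F" and f2: "(v,x',y')\<in>F" for v x y x' y'
  proof -
    have vV: "v\<in>V" using inV f1 by blast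
    have e1: "{v,x}\<in>EE" and e2: "{v,x'}\<in>EE" using edges_face f1 f2 by blast+
    have "(x, x') \<in> ({(u,w). (v,u,w)\<in>F})\<^sup>*" using link[OF vV e1 e2] .
    hence "Q {v,x,opp F v x} = Q {v,x',opp F v x'}"
    proof (induction rule: rtrancl_induct)
      case base show ?case by simp
    next
      case (step u w)
      have uw: "(v,u,w)\<in>F" using step(2) by simp
      have ou: "opp F v u = w" using opp_eq[OF uw] .
      have ew: "{v,w}\<in>EE" using edges_face[OF uw] by (simp add: insert_commute)
      have ow: "opp F w v = u" using opp_eq rot[OF rot[OF uw]] by blast
      have "Q {v,w,opp F v w} = Q {v,w,opp F w v}" using inv[OF ew] .
      also have "{v,w,opp F w v} = {v,u,opp F v u}" using ou ow by (auto simp: insert_commute)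
      finally show ?case using step(3) by simp
    qed
    thus ?thesis using opp_eq[OF f1] opp_eq[OF f2] by simp
  qed
  define q where "q v = Q {v, SOME x. \<exists>y. (v,x,y)\<in>F, opp F v (SOME x. \<exists>y. (v,x,y)\<in>F)}" for v
  have qv: "Q {v,x,y} = q v" if f: "(v,x,y)\<in>F" for v x y
  proof -
    have "\<exists>x y. (v,x,y)\<in>F" using f by blast
    hence "\<exists>y. (v, SOME x. \<exists>y. (v,x,y)\<in>F, y)\<in>F" by (rule someI_ex)
    then obtain y0 where y0: "(v, SOME x. \<exists>y. (v,x,y)\<in>F, y0)\<in>F" by blast
    have "opp F v (SOME x. \<exists>y. (v,x,y)\<in>F) = y0" using opp_eq[OF y0] .
    thus ?thesis unfolding q_def using atv[OF f y0] by simp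
  qed
  have qc: "q u = q w" if u: "u\<in>V" and w: "w\<in>V" for u w
  proof -
    have "(u,w) \<in> ({(x,y). {x,y}\<in>EE})\<^sup>*" using conn[OF u w] .
    thus ?thesis
    proof (induction rule: rtrancl_induct)
      case base show ?case by simp
    next
      case (step y z)
      have yz: "{y,z}\<in>EE" using step(2) by simp
      define c where "c = opp F y z"
      have f: "(y,z,c)\<in>F" unfolding c_def by (rule opp_in[OF yz])
      have f2: "(z,c,y)\<in>F" using rot[OF f] .
      have "q y = Q {y,z,c}" using qv[OF f] by simp
      also have "{y,z,c} = {z,c,y}" by auto
      also have "Q {z,c,y} = q z" using qv[OF f2] .
      finally show ?case using step(3) by simp
    qed
  qed
  obtain a b c where abc: "(a,b,c)\<in>F" "t = {a,b,c}" using FF_cases[OF t] by blast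
  obtain a' b' c' where abc': "(a',b',c')\<in>F" "t' = {a',b',c'}" using FF_cases[OF t'] by blast
  have "Q t = q a" using qv[OF abc(1)] abc(2) by simp
  also have "\<dots> = q a'" using qc inV abc(1) abc'(1) by blast
  also have "\<dots> = Q t'" using qv[OF abc'(1)] abc'(2) by simp
  finally show ?thesis .
qed


definition dmap :: "'a set set \<Rightarrow> 'a set set" where "dmap Z = parmap FF (\<lambda>e t. e \<subseteq> t) Z"
definition delta :: "'a set \<Rightarrow> 'a set set" where "delta U = parmap EE (\<lambda>v e. v \<in> e) U"

lemma face_cnt: assumes f: "(a,b,c)\<in>F" and Z: "Z \<subseteq> EE"
  shows "card {e\<in>Z. e \<subseteq> {a,b,c}} =
    (if {a,b}\<in>Z then 1 else 0) + (if {b,c}\<in>Z then 1 else 0) + (if {c,a}\<in>Z then 1 else 0)"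
proof -
  have "{e\<in>Z. e \<subseteq> {a,b,c}} = {e\<in>{e\<in>EE. e \<subseteq> {a,b,c}}. e \<in> Z}" using Z by auto
  also have "\<dots> = {e\<in>{{a,b},{b,c},{c,a}}. e \<in> Z}" unfolding face_edges[OF f] ..
  finally show ?thesis using cnt3[OF face_edges_distinct[OF f], where P="\<lambda>e. e \<in> Z"] by simp
qed

lemma dmap_hom: "X \<subseteq> EE \<Longrightarrow> Y \<subseteq> EE \<Longrightarrow> dmap (sd X Y) = sd (dmap X) (dmap Y)"
  unfolding dmap_def by (rule parmap_hom) (use finEE finite_subset in auto)

lemma delta_hom: "X \<subseteq> V \<Longrightarrow> Y \<subseteq> V \<Longrightarrow> delta (sd X Y) = sd (delta X) (delta Y)"
  unfolding delta_def by (rule parmap_hom) (use finV finite_subset in auto)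

lemma dmap0: "dmap {} = {}" unfolding dmap_def parmap_def by simp

lemma dmap_single: assumes E: "{a,b}\<in>EE"
  shows "dmap {{a,b}} = sd {{a,b,opp F a b}} {{a,b,opp F b a}}"
proof -
  have c: "card {x\<in>{{a,b}}. x \<subseteq> t} = (if {a,b} \<subseteq> t then 1 else 0)" for t
    using cnt1[where P="\<lambda>x. x \<subseteq> t" and x="{a,b}"] by simp
  have "dmap {{a,b}} = {t\<in>FF. {a,b} \<subseteq> t}" unfolding dmap_def parmap_def c by (auto split: if_splits)
  also have "\<dots> = {{a,b,opp F a b},{a,b,opp F b a}}" by (rule faces_of_edge[OF E])
  also have "\<dots> = sd {{a,b,opp F a b}} {{a,b,opp F b a}}" using two_faces_ne[OF E] unfolding sd_def by auto
  finally show ?thesis .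
qed

lemma dpairs: assumes t: "t\<in>FF" and t': "t'\<in>FF" shows "sd {t} {t'} \<in> dmap ` Pow EE"
proof -
  have cl: "sd P Q \<in> dmap ` Pow EE" if hP: "P \<in> dmap ` Pow EE" and hQ: "Q \<in> dmap ` Pow EE" for P Q
  proof -
    obtain X where X: "X \<subseteq> EE" "P = dmap X" using hP by auto
    obtain Y where Y: "Y \<subseteq> EE" "Q = dmap Y" using hQ by auto
    have "sd P Q = dmap (sd X Y)" using dmap_hom[OF X(1) Y(1)] X Y by simp
    moreover have "sd X Y \<in> Pow EE" using sd_sub[OF X(1) Y(1)] by simp
    ultimately show ?thesis by blast
  qed
  have inv: "(sd {{a,b,opp F a b}} {t'} \<in> dmap ` Pow EE) = (sd {{a,b,opp F b a}} {t'} \<in> dmap ` Pow EE)"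
    if E: "{a,b}\<in>EE" for a b
  proof -
    define f1 where "f1 = {a,b,opp F a b}"
    define f2 where "f2 = {a,b,opp F b a}"
    have s12: "sd {f1} {f2} \<in> dmap ` Pow EE" using dmap_single[OF E] E unfolding f1_def f2_def
      by (metis Pow_iff empty_subsetI image_eqI insert_subset)
    have s21: "sd {f2} {f1} \<in> dmap ` Pow EE" using s12 by (simp add: sd_comm)
    have "sd {f1} {t'} \<in> dmap ` Pow EE \<Longrightarrow> sd {f2} {t'} \<in> dmap ` Pow EE"
      using cl[OF s21] sd_trans[of f2 f1 t'] by metis
    moreover have "sd {f2} {t'} \<in> dmap ` Pow EE \<Longrightarrow> sd {f1} {t'} \<in> dmap ` Pow EE"
      using cl[OF s12] sd_trans[of f1 f2 t'] by metis
    ultimately show ?thesis unfolding f1_def f2_def by blast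
  qed
  have "(sd {t} {t'} \<in> dmap ` Pow EE) = (sd {t'} {t'} \<in> dmap ` Pow EE)"
    by (rule dual_const[where Q="\<lambda>s. sd {s} {t'} \<in> dmap ` Pow EE", OF inv t t'])
  moreover have "sd {t'} {t'} \<in> dmap ` Pow EE" using dmap0 by (metis Pow_bottom image_eqI sd_self)
  ultimately show ?thesis by simp
qed

lemma FF_ne: "FF \<noteq> {}"
proof -
  obtain v where "v\<in>V" using Vne by blast
  then obtain b c where "(v,b,c)\<in>F" using vface by blast
  thus ?thesis using FFI by blast
qed

lemma ker_d: "card {Z \<in> Pow EE. dmap Z = {}} * 2 ^ card FF \<le> 2 * 2 ^ card EE"
  by (rule ker_bound[OF finEE finFF FF_ne dmap_hom dpairs])

lemma delta_ker: assumes U: "U \<subseteq> V" and d: "delta U = {}" shows "U = {} \<or> U = V"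
proof -
  have ev: "(a \<in> U) = (b \<in> U)" if E: "{a,b}\<in>EE" for a b
  proof -
    have ab: "a \<noteq> b" using diam_distinct[OF E] by simp
    have "{a,b} \<notin> delta U" using d by simp
    hence "even (card {v\<in>U. v \<in> {a,b}})" using E unfolding delta_def parmap_def by simp
    moreover have "{v\<in>U. v \<in> {a,b}} = {v\<in>{a,b}. v \<in> U}" by auto
    ultimately have "even (card {v\<in>{a,b}. v \<in> U})" by simp
    thus ?thesis using cnt2[OF ab, where P="\<lambda>v. v \<in> U"] by (auto split: if_splits)
  qed
  obtain v0 where v0: "v0 \<in> V" using Vne by blast
  have all: "(v0 \<in> U) = (w \<in> U)" if w: "w \<in> V" for w
  proof -
    have "(v0,w) \<in> ({(x,y). {x,y}\<in>EE})\<^sup>*" using conn[OF v0 w] .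
    thus ?thesis by (induction rule: rtrancl_induct) (use ev in auto)
  qed
  show ?thesis
  proof (cases "v0 \<in> U")
    case True hence "V \<subseteq> U" using all by blast
    thus ?thesis using U by blast
  next
    case False hence "U = {}" using all U by blast
    thus ?thesis by simp
  qed
qed

lemma im_delta: "2 ^ card V \<le> 2 * card (delta ` Pow V)"
proof -
  have hc: "card (Pow V) = card (delta ` Pow V) * card {U \<in> Pow V. delta U = {}}"
    by (rule hom_count[OF finV delta_hom])
  have "{U \<in> Pow V. delta U = {}} \<subseteq> {{}, V}" using delta_ker by blast
  hence "card {U \<in> Pow V. delta U = {}} \<le> card {{}, V}" by (rule card_mono[rotated]) simp
  moreover have "card {{}, V} \<le> 2" by (cases "V = {}") auto
  ultimately have k2: "card {U \<in> Pow V. delta U = {}} \<le> 2" by linarith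
  have "card (delta ` Pow V) * card {U \<in> Pow V. delta U = {}} \<le> card (delta ` Pow V) * 2"
    using k2 by (rule mult_le_mono2)
  thus ?thesis using hc finV by (simp add: card_Pow)
qed


lemma delta_mem: assumes E: "{a,b}\<in>EE"
  shows "{a,b} \<in> delta U \<longleftrightarrow> ((a \<in> U) \<noteq> (b \<in> U))"
proof -
  have ab: "a \<noteq> b" using diam_distinct[OF E] by simp
  have "{v\<in>U. v \<in> {a,b}} = {v\<in>{a,b}. v \<in> U}" by auto
  hence "card {v\<in>U. v \<in> {a,b}} = (if a \<in> U then 1 else 0) + (if b \<in> U then 1 else 0)"
    using cnt2[OF ab, where P="\<lambda>v. v \<in> U"] by simp
  thus ?thesis using E unfolding delta_def parmap_def by auto
qed

lemma im_delta_ker: assumes U: "U \<subseteq> V" shows "dmap (delta U) = {}"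
proof -
  have "even (card {e\<in>delta U. e \<subseteq> t})" if t: "t\<in>FF" for t
  proof -
    obtain a b c where abc: "(a,b,c)\<in>F" "t = {a,b,c}" using FF_cases[OF t] by blast
    have E: "{a,b}\<in>EE" "{b,c}\<in>EE" "{c,a}\<in>EE" using edges_face[OF abc(1)] by auto
    have "card {e\<in>delta U. e \<subseteq> t} =
      (if {a,b}\<in>delta U then 1 else 0) + (if {b,c}\<in>delta U then 1 else 0) + (if {c,a}\<in>delta U then 1 else 0)"
      unfolding abc(2) by (rule face_cnt[OF abc(1)]) (simp add: delta_def parmap_sub)
    thus ?thesis unfolding delta_mem[OF E(1)] delta_mem[OF E(2)] delta_mem[OF E(3)] by auto
  qed
  thus ?thesis unfolding dmap_def parmap_def by auto
qed

lemma cocycle: assumes Z: "Z \<subseteq> EE" and dZ: "dmap Z = {}" shows "\<exists>U. U \<subseteq> V \<and> Z = delta U"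
proof -
  define K where "K = {Z \<in> Pow EE. dmap Z = {}}"
  define I where "I = delta ` Pow V"
  have IK: "I \<subseteq> K"
  proof
    fix Z assume "Z \<in> I"
    then obtain U where U: "U \<subseteq> V" "Z = delta U" unfolding I_def by auto
    moreover have "delta U \<subseteq> EE" unfolding delta_def by (rule parmap_sub)
    ultimately show "Z \<in> K" unfolding K_def using im_delta_ker by simp
  qed
  have fK: "finite K" unfolding K_def using finEE by simp
  have A: "card K * 2 ^ card FF \<le> 2 * 2 ^ card EE" using ker_d unfolding K_def .
  have B: "2 ^ card V \<le> 2 * card I" using im_delta unfolding I_def .
  have C: "(4::nat) * 2 ^ card EE = 2 ^ card V * 2 ^ card FF"
  proof -
    have "(2::nat) ^ (card EE + 2) = 2 ^ (card V + card FF)" using eul by simp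
    thus ?thesis by (simp add: power_add)
  qed
  have "card K * (4 * 2 ^ card FF) \<le> 4 * (2 * 2 ^ card EE)" using A by simp
  also have "\<dots> = 2 * (2 ^ card V * 2 ^ card FF)" using C by simp
  also have "\<dots> \<le> 2 * ((2 * card I) * 2 ^ card FF)" using B by simp
  also have "\<dots> = card I * (4 * 2 ^ card FF)" by simp
  finally have "card K \<le> card I" by simp
  hence "I = K" using card_seteq[OF fK IK] by simp
  moreover have "Z \<in> K" unfolding K_def using Z dZ by simp
  ultimately show ?thesis unfolding I_def by auto
qed

lemma face_par:
  fixes X :: "'a set \<Rightarrow> int"
  assumes dX: "\<And>a b. {a,b}\<in>EE \<Longrightarrow> even (dia X a b)"
  shows "dmap {e\<in>EE. odd (X e)} = {} \<or> dmap (EE - {e\<in>EE. odd (X e)}) = {}"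
proof -
  define Xs where "Xs = {e\<in>EE. odd (X e)}"
  have XsE: "Xs \<subseteq> EE" unfolding Xs_def by auto
  have fc: "odd (card {e\<in>Xs. e \<subseteq> {a,b,c}}) \<longleftrightarrow> odd (X{a,b} + X{b,c} + X{c,a})" if f: "(a,b,c)\<in>F" for a b c
  proof -
    have E: "{a,b}\<in>EE" "{b,c}\<in>EE" "{c,a}\<in>EE" using edges_face[OF f] by auto
    have "card {e\<in>Xs. e \<subseteq> {a,b,c}} =
      (if {a,b}\<in>Xs then 1 else 0) + (if {b,c}\<in>Xs then 1 else 0) + (if {c,a}\<in>Xs then 1 else 0)"
      by (rule face_cnt[OF f XsE])
    moreover have "({a,b}\<in>Xs) = odd (X{a,b})" "({b,c}\<in>Xs) = odd (X{b,c})" "({c,a}\<in>Xs) = odd (X{c,a})"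
      using E unfolding Xs_def by auto
    ultimately show ?thesis by (auto split: if_splits)
  qed
  have fc2: "odd (card {e\<in>EE - Xs. e \<subseteq> {a,b,c}}) \<longleftrightarrow> even (X{a,b} + X{b,c} + X{c,a})" if f: "(a,b,c)\<in>F" for a b c
  proof -
    have E: "{a,b}\<in>EE" "{b,c}\<in>EE" "{c,a}\<in>EE" using edges_face[OF f] by auto
    have "card {e\<in>EE - Xs. e \<subseteq> {a,b,c}} =
      (if {a,b}\<in>EE - Xs then 1 else 0) + (if {b,c}\<in>EE - Xs then 1 else 0) + (if {c,a}\<in>EE - Xs then 1 else 0)"
      by (rule face_cnt[OF f]) auto
    moreover have "({a,b}\<in>EE - Xs) = even (X{a,b})" "({b,c}\<in>EE - Xs) = even (X{b,c})" "({c,a}\<in>EE - Xs) = even (X{c,a})"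
      using E unfolding Xs_def by auto
    ultimately show ?thesis by (auto split: if_splits)
  qed
  define Q where "Q t = odd (card {e\<in>Xs. e \<subseteq> t})" for t
  have inv: "Q {a,b,opp F a b} = Q {a,b,opp F b a}" if E: "{a,b}\<in>EE" for a b
  proof -
    define c where "c = opp F a b"
    define d where "d = opp F b a"
    have f1: "(a,b,c)\<in>F" unfolding c_def by (rule opp_in[OF E])
    have f2: "(b,a,d)\<in>F" unfolding d_def by (rule opp_in[OF edge_sym[OF E]])
    have q1: "Q {a,b,c} = odd (X{a,b} + X{b,c} + X{c,a})" unfolding Q_def using fc[OF f1] .
    have "{b,a,d} = {a,b,d}" by (rule insert_commute)
    hence q2: "Q {a,b,d} = odd (X{a,b} + X{a,d} + X{d,b})" unfolding Q_def using fc[OF f2] by (simp add: insert_commute)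
    have "even (X{c,a} + X{d,b} - X{b,c} - X{a,d})" using dX[OF E] unfolding dia_def c_def d_def .
    hence "Q {a,b,c} = Q {a,b,d}" unfolding q1 q2 by presburger
    thus ?thesis unfolding c_def d_def .
  qed
  obtain t0 where t0: "t0 \<in> FF" using FF_ne by blast
  have allQ: "Q t = Q t0" if t: "t\<in>FF" for t by (rule dual_const[where Q=Q, OF inv t t0])
  show ?thesis
  proof (cases "Q t0")
    case False
    hence "dmap Xs = {}" unfolding dmap_def parmap_def using allQ unfolding Q_def by auto
    thus ?thesis unfolding Xs_def by simp
  next
    case True
    have "even (card {e\<in>EE - Xs. e \<subseteq> t})" if t: "t\<in>FF" for t
    proof -
      obtain a b c where abc: "(a,b,c)\<in>F" "t = {a,b,c}" using FF_cases[OF t] by blast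
      have "Q t" using allQ[OF t] True by simp
      hence "odd (X{a,b} + X{b,c} + X{c,a})" using fc[OF abc(1)] abc(2) unfolding Q_def by simp
      thus ?thesis using fc2[OF abc(1)] abc(2) by simp
    qed
    hence "dmap (EE - Xs) = {}" unfolding dmap_def parmap_def by auto
    thus ?thesis unfolding Xs_def by simp
  qed
qed

end


lemma suc_mod_iff:
  fixes i j k :: nat
  assumes "i < k" "j < k"
  shows "Suc i mod k = j \<longleftrightarrow> i = (j + k - 1) mod k"
proof
  assume h: "Suc i mod k = j"
  have "(j + k - 1) mod k = (Suc i mod k + (k - 1)) mod k" using h assms by simp
  also have "\<dots> = (Suc i + (k - 1)) mod k" by (simp add: mod_add_left_eq)
  also have "Suc i + (k - 1) = i + k" using assms by simp
  also have "(i + k) mod k = i" using assms by simp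
  finally show "i = (j + k - 1) mod k" by simp
next
  assume h: "i = (j + k - 1) mod k"
  have "Suc i mod k = Suc ((j + k - 1) mod k) mod k" using h by simp
  also have "\<dots> = Suc (j + k - 1) mod k" by (simp add: mod_Suc_eq)
  also have "Suc (j + k - 1) = j + k" using assms by simp
  also have "(j + k) mod k = j" using assms by simp
  finally show "Suc i mod k = j" .
qed

context
  fixes H :: "'a set set" and vs :: "'a list"
  assumes cyc: "is_cycle H vs"
begin

definition ed :: "nat \<Rightarrow> 'a set" where
  "ed i = {vs!i, vs!(Suc i mod length vs)}"

lemma k3: "length vs \<ge> 3" using cyc unfolding is_cycle_def by simp
lemma dvs: "distinct vs" using cyc unfolding is_cycle_def by simp

lemma ed_in: "i < length vs \<Longrightarrow> ed i \<in> H"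
  using cyc unfolding is_cycle_def ed_def by simp

lemma ed_inj: "inj_on ed {..<length vs}"
proof
  fix i j assume i: "i \<in> {..<length vs}" and j: "j \<in> {..<length vs}" and e: "ed i = ed j"
  define k where "k = length vs"
  have ik: "i < k" and jk: "j < k" using i j unfolding k_def by auto
  have k3': "k \<ge> 3" using k3 unfolding k_def by simp
  have si: "Suc i mod k < k" and sj: "Suc j mod k < k" using k3' by auto
  have "(vs!i = vs!j \<and> vs!(Suc i mod k) = vs!(Suc j mod k)) \<or> (vs!i = vs!(Suc j mod k) \<and> vs!(Suc i mod k) = vs!j)"
    using e unfolding ed_def k_def by (simp add: doubleton_eq_iff)
  thus "i = j"
  proof
    assume "vs!i = vs!j \<and> vs!(Suc i mod k) = vs!(Suc j mod k)"
    thus "i = j" using dvs ik jk unfolding k_def by (simp add: nth_eq_iff_index_eq)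
  next
    assume h: "vs!i = vs!(Suc j mod k) \<and> vs!(Suc i mod k) = vs!j"
    have 1: "i = Suc j mod k" using h dvs ik sj unfolding k_def by (simp add: nth_eq_iff_index_eq)
    have 2: "Suc i mod k = j" using h dvs jk si unfolding k_def by (simp add: nth_eq_iff_index_eq)
    have "Suc (Suc i) mod k = Suc (Suc i mod k) mod k" by (simp add: mod_Suc_eq)
    also have "\<dots> = i" using 1 2 by simp
    also have "\<dots> = i mod k" using ik by simp
    finally have "Suc (Suc i) mod k = i mod k" .
    hence "k dvd Suc (Suc i) - i" by (simp add: mod_eq_dvd_iff_nat)
    hence "k dvd 2" by simp
    hence "k \<le> 2" by (simp add: dvd_imp_le)
    thus "i = j" using k3' by simp
  qed
qed

definition C :: "'a set set" where "C = ed ` {..<length vs}"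

lemma C_sub: "C \<subseteq> H" unfolding C_def using ed_in by auto
lemma card_C: "card C = length vs" unfolding C_def using ed_inj by (simp add: card_image)
lemma C_ne: "C \<noteq> {}"
proof -
  have "0 < length vs" using k3 by linarith
  hence "0 \<in> {..<length vs}" by simp
  thus ?thesis unfolding C_def by blast
qed

lemma deg_C: "even (card {e\<in>C. v \<in> e})"
proof -
  define k where "k = length vs"
  have k3': "k \<ge> 3" using k3 unfolding k_def by simp
  have eq: "{e\<in>C. v \<in> e} = ed ` {i\<in>{..<k}. v \<in> ed i}" unfolding C_def k_def by auto
  have "inj_on ed {i\<in>{..<k}. v \<in> ed i}" using ed_inj unfolding k_def by (rule inj_on_subset) auto
  hence cd: "card {e\<in>C. v \<in> e} = card {i\<in>{..<k}. v \<in> ed i}" unfolding eq by (simp add: card_image)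
  show ?thesis
  proof (cases "v \<in> set vs")
    case False
    have nv: "v \<notin> ed i" if ik: "i < k" for i
    proof -
      have "Suc i mod k < k" using k3' by simp
      hence "vs!(Suc i mod k) \<in> set vs" "vs!i \<in> set vs" using ik unfolding k_def by auto
      thus ?thesis using False unfolding ed_def k_def by auto
    qed
    hence "{i\<in>{..<k}. v \<in> ed i} = {}" by auto
    hence e: "card {i\<in>{..<k}. v \<in> ed i} = 0" by (metis card.empty)
    show ?thesis unfolding cd e by simp
  next
    case True
    then obtain j where j: "j < k" "vs!j = v" unfolding k_def by (metis in_set_conv_nth)
    define j' where "j' = (j + k - 1) mod k"
    have j'k: "j' < k" unfolding j'_def using k3' by simp
    have S: "{i\<in>{..<k}. v \<in> ed i} = {j, j'}"
    proof (rule Set.set_eqI)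
      fix i
      show "i \<in> {i\<in>{..<k}. v \<in> ed i} \<longleftrightarrow> i \<in> {j, j'}"
      proof
        assume "i \<in> {i\<in>{..<k}. v \<in> ed i}"
        hence ik: "i < k" and vi: "v = vs!i \<or> v = vs!(Suc i mod k)" unfolding ed_def k_def by auto
        have sik: "Suc i mod k < k" using k3' by simp
        from vi show "i \<in> {j, j'}"
        proof
          assume "v = vs!i" thus ?thesis using j ik dvs unfolding k_def by (simp add: nth_eq_iff_index_eq)
        next
          assume "v = vs!(Suc i mod k)"
          hence "Suc i mod k = j" using j sik dvs unfolding k_def by (simp add: nth_eq_iff_index_eq)
          thus ?thesis using suc_mod_iff[OF ik j(1)] unfolding j'_def by simp
        qed
      next
        assume "i \<in> {j, j'}"
        thus "i \<in> {i\<in>{..<k}. v \<in> ed i}"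
        proof
          assume "i = j" thus ?thesis using j unfolding ed_def k_def by simp
        next
          assume "i \<in> {j'}"
          hence ij: "i = j'" by simp
          hence "Suc i mod k = j" using suc_mod_iff[OF j'k j(1)] unfolding j'_def by simp
          thus ?thesis using ij j'k j unfolding ed_def k_def by auto
        qed
      qed
    qed
    have jne: "j \<noteq> j'"
    proof
      assume h: "j = j'"
      have "(j + (k - 1)) mod k = j mod k" using h j(1) k3' unfolding j'_def by simp
      hence "k dvd (j + (k - 1)) - j" by (simp add: mod_eq_dvd_iff_nat)
      hence "k dvd k - 1" by simp
      moreover have "0 < k - 1" using k3' by simp
      ultimately have "k \<le> k - 1" by (rule dvd_imp_le)
      thus False using k3' by simp
    qed
    have e: "card {i\<in>{..<k}. v \<in> ed i} = 2" unfolding S using jne by simp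
    show ?thesis unfolding cd e by simp
  qed
qed

end

lemma even_subgraph:
  fixes V :: "'a set" and H :: "'a set set"
  assumes finV: "finite V" and neV: "V \<noteq> {}" and finH: "finite H"
    and Hedges: "\<And>e. e\<in>H \<Longrightarrow> \<exists>a b. a \<noteq> b \<and> a\<in>V \<and> b\<in>V \<and> e = {a,b}"
    and cH: "card H = card V"
    and sc: "spanning_connected V H" and cyc: "is_cycle H vs"
    and Z: "Z \<subseteq> H" and Zd: "\<forall>v\<in>V. even (card {e\<in>Z. v \<in> e})"
  shows "Z = {} \<or> Z = C vs"
proof -
  define \<delta> where "\<delta> = parmap V (\<lambda>e v. v \<in> e)"
  have hom: "\<delta> (sd X Y) = sd (\<delta> X) (\<delta> Y)" if "X \<subseteq> H" "Y \<subseteq> H" for X Y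
    unfolding \<delta>_def by (rule parmap_hom) (use finite_subset[OF that(1) finH] finite_subset[OF that(2) finH] in auto)
  have d0: "\<delta> {} = {}" unfolding \<delta>_def parmap_def by simp
  have pairs: "sd {u} {w} \<in> \<delta> ` Pow H" if u: "u\<in>V" and w: "w\<in>V" for u w
  proof -
    have "(u,w) \<in> ({(x,y). {x,y}\<in>H})\<^sup>*" using sc u w unfolding spanning_connected_def by blast
    thus ?thesis
    proof (induction rule: rtrancl_induct)
      case base
      have "{} \<in> \<delta> ` Pow H" using d0 by (metis Pow_bottom image_eqI)
      thus ?case by simp
    next
      case (step y z)
      have yz: "{y,z} \<in> H" using step(2) by simp
      obtain a b where ab: "a \<noteq> b" "a\<in>V" "b\<in>V" "{y,z} = {a,b}" using Hedges[OF yz] by blast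
      have yzV: "y \<noteq> z" "y \<in> V" "z \<in> V" using ab by (auto simp: doubleton_eq_iff)
      have cnt: "card {x\<in>{{y,z}}. v \<in> x} = (if v \<in> {y,z} then 1 else 0)" for v
      proof (cases "v \<in> {y,z}")
        case True hence "{x\<in>{{y,z}}. v \<in> x} = {{y,z}}" by auto
        thus ?thesis using True by simp
      next
        case False hence "{x\<in>{{y,z}}. v \<in> x} = {}" by auto
        thus ?thesis using False by simp
      qed
      have "\<delta> {{y,z}} = {v\<in>V. v \<in> {y,z}}" unfolding \<delta>_def parmap_def cnt by auto
      also have "\<dots> = sd {y} {z}" using yzV unfolding sd_def by auto
      finally have "sd {y} {z} \<in> \<delta> ` Pow H" using yz by (metis Pow_iff empty_subsetI image_eqI insert_subset)
      then obtain Q where Q: "Q \<subseteq> H" "\<delta> Q = sd {y} {z}" by auto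
      obtain P where P: "P \<subseteq> H" "\<delta> P = sd {u} {y}" using step(3) by auto
      have "\<delta> (sd P Q) = sd {u} {z}" using hom[OF P(1) Q(1)] P Q sd_trans by simp
      moreover have "sd P Q \<subseteq> H" by (rule sd_sub[OF P(1) Q(1)])
      ultimately show ?case by (metis Pow_iff image_eqI)
    qed
  qed
  have kb: "card {X \<in> Pow H. \<delta> X = {}} * 2 ^ card V \<le> 2 * 2 ^ card H"
    by (rule ker_bound[OF finH finV neV hom pairs])
  hence kc: "card {X \<in> Pow H. \<delta> X = {}} \<le> 2" using cH by simp
  have Cin: "C vs \<in> {X \<in> Pow H. \<delta> X = {}}"
    using C_sub[OF cyc] deg_C[OF cyc] unfolding \<delta>_def parmap_def by auto
  have Ein: "{} \<in> {X \<in> Pow H. \<delta> X = {}}" using d0 by simp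
  have Zin: "Z \<in> {X \<in> Pow H. \<delta> X = {}}" using Z Zd unfolding \<delta>_def parmap_def by auto
  have fk: "finite {X \<in> Pow H. \<delta> X = {}}" using finH by simp
  show ?thesis
  proof (rule ccontr)
    assume "\<not> ?thesis"
    hence "{Z, {}, C vs} \<subseteq> {X \<in> Pow H. \<delta> X = {}}" "card {Z, {}, C vs} = 3"
      using Cin Ein Zin C_ne[OF cyc] by auto
    hence "3 \<le> card {X \<in> Pow H. \<delta> X = {}}" by (metis card_mono fk)
    thus False using kc by simp
  qed
qed


lemma sum_parity:
  fixes f :: "'x \<Rightarrow> int"
  assumes "finite A" shows "even (sum f A) \<longleftrightarrow> even (card {x\<in>A. odd (f x)})"
  using assms
proof (induction A rule: finite_induct)
  case empty show ?case by simp
next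
  case (insert x A)
  have "card {y\<in>insert x A. odd (f y)} = (if odd (f x) then 1 else 0) + card {y\<in>A. odd (f y)}"
    by (rule cnt_insert) (use insert in auto)
  thus ?case using insert by auto
qed

context tri begin

lemma edge_V: assumes "e\<in>EE" shows "\<exists>a b. a \<noteq> b \<and> a\<in>V \<and> b\<in>V \<and> e = {a,b}"
proof -
  obtain a b c where abc: "(a,b,c)\<in>F" "e = {a,b}" using EE_cases[OF assms] by blast
  thus ?thesis using dist[OF abc(1)] inV[OF abc(1)] by blast
qed

lemma kernel:
  fixes X :: "'a set \<Rightarrow> int" and p :: int
  assumes E0: "E0 \<subseteq> EE" and cE: "card (EE - E0) = card V"
    and sc: "spanning_connected V (EE - E0)" and cyc: "is_cycle (EE - E0) vs" and oddk: "odd (length vs)"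
    and p: "prime p" and X0: "\<And>e. e \<notin> E0 \<Longrightarrow> X e = 0" and h: "\<And>e. e\<in>E0 \<Longrightarrow> p dvd Emul X e"
  shows "\<forall>e\<in>E0. p dvd X e"
proof -
  define H where "H = EE - E0"
  define Y where "Y = Emul X"
  have finH: "finite H" unfolding H_def using finEE by simp
  have Hedges: "\<And>e. e\<in>H \<Longrightarrow> \<exists>a b. a \<noteq> b \<and> a\<in>V \<and> b\<in>V \<and> e = {a,b}" unfolding H_def using edge_V by blast
  have k3: "length vs \<ge> 3" using cyc unfolding is_cycle_def by simp
  have hc: "\<forall>j<length vs. {vs!j, vs!(Suc j mod length vs)} \<in> EE - E0" using cyc unfolding is_cycle_def by simp
  have "{vs!0, vs!(Suc 0 mod length vs)} \<in> H" unfolding H_def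
  proof (rule hc[rule_format])
    show "0 < length vs" using k3 by linarith
  qed
  then obtain a b where "a\<in>V" "b\<in>V" "{vs!0, vs!(Suc 0 mod length vs)} = {a,b}" using Hedges by blast
  hence vs0: "vs!0 \<in> V" by auto
  have XH: "X e = 0" if "e \<in> H" for e using X0 that unfolding H_def by blast
  have vs: "(\<Sum>e\<in>{e\<in>EE. v \<in> e}. Y e) = 0" for v unfolding Y_def by (rule vsum0)
  show ?thesis
  proof (cases "p = 2")
    case False
    have oddp: "odd p"
    proof
      assume "even p"
      hence "(2::int) dvd p" by simp
      moreover have "0 \<le> (2::int) \<and> 2 dvd p \<longrightarrow> (2::int) = 1 \<or> 2 = p" using p unfolding prime_int_iff by blast
      ultimately have "(2::int) = 1 \<or> 2 = p" by simp
      thus False using False by simp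
    qed
    define m where "m = card V"
    obtain gV where gV: "bij_betw gV {..<m} V" using ex_bij_betw_nat_finite[OF finV] unfolding m_def
      by (metis lessThan_atLeast0)
    obtain gH where gH: "bij_betw gH {..<m} H" using ex_bij_betw_nat_finite[OF finH] cE unfolding m_def H_def
      by (metis lessThan_atLeast0)
    define t where "t j i = (if gV i \<in> gH j then 1 else (0::int))" for j i
    have sumV: "(\<Sum>i<m. (if gV i \<in> e then 1 else 0) * z i) = (\<Sum>v\<in>{v\<in>V. v \<in> e}. z (inv_into {..<m} gV v))"
      for e and z :: "nat \<Rightarrow> int"
    proof -
      have "(\<Sum>i<m. (if gV i \<in> e then 1 else 0) * z i) = (\<Sum>i<m. (if gV i \<in> e then z (inv_into {..<m} gV (gV i)) else 0))"
        by (rule sum.cong[OF refl]) (use gV in \<open>simp add: bij_betw_def inv_into_f_f\<close>)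
      also have "\<dots> = (\<Sum>v\<in>V. (if v \<in> e then z (inv_into {..<m} gV v) else 0))"
        by (rule sum.reindex_bij_betw[OF gV])
      also have "\<dots> = (\<Sum>v\<in>{v\<in>V. v \<in> e}. z (inv_into {..<m} gV v))"
        using finV by (simp add: sum.inter_filter)
      finally show ?thesis .
    qed
    have mi1: "modinj p m t"
      unfolding modinj_def
    proof (intro allI impI)
      fix \<phi> :: "nat \<Rightarrow> int" and i
      assume hyp: "\<forall>j<m. p dvd (\<Sum>i<m. t j i * \<phi> i)" and i: "i < m"
      define \<psi> where "\<psi> v = \<phi> (inv_into {..<m} gV v)" for v
      have ed: "p dvd \<psi> a + \<psi> b" if ab: "{a,b} \<in> H" for a b
      proof -
        obtain j where j: "j < m" "gH j = {a,b}" using gH ab unfolding bij_betw_def by auto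
        have abV: "a \<noteq> b" "a\<in>V" "b\<in>V" using Hedges[OF ab] by (auto simp: doubleton_eq_iff)
        have "(\<Sum>i<m. t j i * \<phi> i) = (\<Sum>v\<in>{v\<in>V. v \<in> {a,b}}. \<psi> v)"
          unfolding t_def j(2) \<psi>_def by (rule sumV)
        also have "{v\<in>V. v \<in> {a,b}} = {a,b}" using abV by auto
        also have "(\<Sum>v\<in>{a,b}. \<psi> v) = \<psi> a + \<psi> b" using abV by simp
        finally have eq: "(\<Sum>i<m. t j i * \<phi> i) = \<psi> a + \<psi> b" .
        have "p dvd (\<Sum>i<m. t j i * \<phi> i)" using hyp j(1) by blast
        thus ?thesis unfolding eq .
      qed
      have "\<forall>v\<in>V. p dvd \<psi> v" by (rule oddcycle_zero[OF p oddp ed sc[folded H_def] cyc[folded H_def] oddk vs0])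
      moreover have "gV i \<in> V" using gV i unfolding bij_betw_def by auto
      moreover have "inv_into {..<m} gV (gV i) = i" using gV i unfolding bij_betw_def by (simp add: inv_into_f_f)
      ultimately show "p dvd \<phi> i" unfolding \<psi>_def by metis
    qed
    have mi2: "modinj p m (\<lambda>i j. t j i)" by (rule modinj_transpose[OF p mi1])
    have YH: "p dvd Y e" if eH: "e \<in> H" for e
    proof -
      obtain j0 where j0: "j0 < m" "gH j0 = e" using gH eH unfolding bij_betw_def by auto
      have "\<forall>i<m. p dvd (\<Sum>j<m. t j i * Y (gH j))"
      proof (intro allI impI)
        fix i assume i: "i < m"
        define v where "v = gV i"
        have "(\<Sum>j<m. t j i * Y (gH j)) = (\<Sum>j<m. (if v \<in> gH j then Y (gH j) else 0))"
          unfolding t_def v_def by (rule sum.cong) auto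
        also have "\<dots> = (\<Sum>e\<in>H. (if v \<in> e then Y e else 0))"
          by (rule sum.reindex_bij_betw[OF gH])
        also have "\<dots> = (\<Sum>e\<in>{e\<in>H. v \<in> e}. Y e)" using finH by (simp add: sum.inter_filter)
        finally have s1: "(\<Sum>j<m. t j i * Y (gH j)) = (\<Sum>e\<in>{e\<in>H. v \<in> e}. Y e)" .
        have U: "{e\<in>EE. v \<in> e} = {e\<in>H. v \<in> e} \<union> {e\<in>E0. v \<in> e}" unfolding H_def using E0 by auto
        have D: "{e\<in>H. v \<in> e} \<inter> {e\<in>E0. v \<in> e} = {}" unfolding H_def by auto
        have fin1: "finite {e\<in>H. v \<in> e}" using finH by simp
        have fin2: "finite {e\<in>E0. v \<in> e}" using finite_subset[OF E0 finEE] by simp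
        have "(\<Sum>e\<in>{e\<in>EE. v \<in> e}. Y e) = (\<Sum>e\<in>{e\<in>H. v \<in> e}. Y e) + (\<Sum>e\<in>{e\<in>E0. v \<in> e}. Y e)"
          unfolding U by (rule sum.union_disjoint[OF fin1 fin2 D])
        hence sA: "(\<Sum>e\<in>{e\<in>H. v \<in> e}. Y e) = - (\<Sum>e\<in>{e\<in>E0. v \<in> e}. Y e)" using vs[of v] by linarith
        have "p dvd (\<Sum>e\<in>{e\<in>E0. v \<in> e}. Y e)" unfolding Y_def using h by (intro dvd_sum) simp
        thus "p dvd (\<Sum>j<m. t j i * Y (gH j))" unfolding s1 sA by simp
      qed
      hence "\<forall>j<m. p dvd Y (gH j)" using mi2[unfolded modinj_def, THEN spec, of "\<lambda>j. Y (gH j)"] by simp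
      thus ?thesis using j0 by blast
    qed
    have Yall: "p dvd Emul X e" if "e\<in>EE" for e
      using that h YH unfolding Y_def H_def by blast
    obtain \<psi> where \<psi>: "\<forall>a b. {a,b}\<in>EE \<longrightarrow> p dvd 2 * X{a,b} - \<psi> a - \<psi> b"
      using localpot[of p X] Yall by blast
    have ed: "p dvd \<psi> a + \<psi> b" if ab: "{a,b} \<in> H" for a b
    proof -
      have "{a,b}\<in>EE" using ab unfolding H_def by simp
      hence "p dvd 2 * X{a,b} - \<psi> a - \<psi> b" using \<psi> by blast
      moreover have "X{a,b} = 0" using XH ab by simp
      ultimately have "p dvd - (\<psi> a + \<psi> b)" by simp
      thus ?thesis by (simp only: dvd_minus_iff)
    qed
    have z: "\<forall>v\<in>V. p dvd \<psi> v" by (rule oddcycle_zero[OF p oddp ed sc[folded H_def] cyc[folded H_def] oddk vs0])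
    show ?thesis
    proof
      fix e assume e: "e \<in> E0"
      obtain a b where ab: "a \<noteq> b" "a\<in>V" "b\<in>V" "e = {a,b}" using edge_V E0 e by blast
      have "p dvd 2 * X{a,b} - \<psi> a - \<psi> b" using \<psi> E0 e ab(4) by blast
      hence "p dvd (2 * X{a,b} - \<psi> a - \<psi> b) + \<psi> a + \<psi> b" using z ab by (meson dvd_add)
      hence "p dvd 2 * X e" using ab(4) by simp
      moreover have "\<not> p dvd 2"
      proof
        assume "p dvd 2"
        hence "p \<le> 2" by (simp add: zdvd_imp_le)
        moreover have "p \<ge> 2" using p prime_ge_2_int by blast
        ultimately show False using False by simp
      qed
      ultimately show "p dvd X e" using p by (simp add: prime_dvd_mult_iff)
    qed
  next
    case True
    define Ys where "Ys = {e\<in>H. odd (Y e)}"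
    have YE0: "even (Y e)" if "e\<in>E0" for e using h[OF that] True unfolding Y_def by simp
    have deg: "even (card {e\<in>Ys. v \<in> e})" if "v\<in>V" for v
    proof -
      have "even (\<Sum>e\<in>{e\<in>EE. v \<in> e}. Y e)" using vs by simp
      moreover have fin: "finite {e\<in>EE. v \<in> e}" using finEE by simp
      ultimately have "even (card {e\<in>{e\<in>EE. v \<in> e}. odd (Y e)})"
        using sum_parity[where f=Y, OF fin] by blast
      moreover have "{e\<in>{e\<in>EE. v \<in> e}. odd (Y e)} = {e\<in>Ys. v \<in> e}"
        unfolding Ys_def H_def using YE0 by auto
      ultimately show ?thesis by simp
    qed
    have "Ys = {} \<or> Ys = C vs"
      by (rule even_subgraph[OF finV Vne finH Hedges cE[folded H_def] sc[folded H_def] cyc[folded H_def]])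
         (use deg in \<open>auto simp: Ys_def\<close>)
    moreover have "even (card Ys)"
    proof -
      have "even (\<Sum>e\<in>EE. Y e)" unfolding Y_def using tsum0 by simp
      hence "even (card {e\<in>EE. odd (Y e)})" using sum_parity[where f=Y, OF finEE] by blast
      moreover have "{e\<in>EE. odd (Y e)} = Ys" unfolding Ys_def H_def using YE0 by auto
      ultimately show ?thesis by simp
    qed
    moreover have "odd (card (C vs))" using card_C[OF cyc] oddk by simp
    ultimately have Ys0: "Ys = {}" by auto
    have Yev: "even (Emul X e)" if "e\<in>EE" for e
    proof (cases "e\<in>E0")
      case True thus ?thesis using YE0 unfolding Y_def by simp
    next
      case False hence "e\<in>H" using that unfolding H_def by simp
      thus ?thesis using Ys0 unfolding Ys_def Y_def by auto
    qed
    have dX: "even (dia X a b)" if "{a,b}\<in>EE" for a b using Yev[OF that] Emul_dia[OF that] by simp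
    define Xs where "Xs = {e\<in>EE. odd (X e)}"
    have XsH: "e \<notin> Xs" if "e \<in> H" for e using XH[OF that] unfolding Xs_def by simp
    have "dmap Xs = {} \<or> dmap (EE - Xs) = {}" unfolding Xs_def by (rule face_par[OF dX])
    thus ?thesis
    proof
      assume d: "dmap Xs = {}"
      obtain U where U: "U \<subseteq> V" "Xs = delta U" using cocycle[OF _ d] unfolding Xs_def by auto
      have sameH: "(a \<in> U) = (b \<in> U)" if ab: "{a,b} \<in> H" for a b
        using XsH[OF ab] delta_mem[of a b U] ab U(2) unfolding H_def by auto
      show ?thesis
      proof
        fix e assume e: "e \<in> E0"
        obtain a b where ab: "a \<noteq> b" "a\<in>V" "b\<in>V" "e = {a,b}" using edge_V E0 e by blast
        have "(a \<in> U) = (b \<in> U)" by (rule conn_const[OF sc[folded H_def] sameH ab(2) ab(3)])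
        hence "e \<notin> Xs" using delta_mem[of a b U] U(2) ab E0 e by auto
        thus "p dvd X e" using True E0 e unfolding Xs_def by auto
      qed
    next
      assume d: "dmap (EE - Xs) = {}"
      obtain U where U: "U \<subseteq> V" "EE - Xs = delta U" using cocycle[OF _ d] by auto
      define \<phi> where "\<phi> v = (if v \<in> U then 1 else (-1::int))" for v
      have ed: "(3::int) dvd \<phi> a + \<phi> b" if ab: "{a,b} \<in> H" for a b
      proof -
        have "{a,b} \<in> EE - Xs" using XsH[OF ab] ab unfolding H_def by auto
        hence "(a \<in> U) \<noteq> (b \<in> U)" using delta_mem[of a b U] U(2) ab unfolding H_def by auto
        hence "\<phi> a + \<phi> b = 0" unfolding \<phi>_def by auto
        thus ?thesis by simp
      qed
      have p3: "prime (3::int)" unfolding prime_int_iff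
      proof (intro conjI allI impI)
        fix m :: int assume hm: "0 \<le> m \<and> m dvd 3"
        hence m3: "m \<le> 3" by (auto simp: zdvd_imp_le)
        hence "m = 0 \<or> m = 1 \<or> m = 2 \<or> m = 3" using hm by auto
        thus "m = 1 \<or> m = 3" using hm by auto
      qed simp
      have "\<forall>v\<in>V. (3::int) dvd \<phi> v"
        by (rule oddcycle_zero[OF p3 _ ed sc[folded H_def] cyc[folded H_def] oddk vs0]) simp
      hence "(3::int) dvd \<phi> (vs!0)" using vs0 by blast
      thus ?thesis unfolding \<phi>_def by (auto split: if_splits)
    qed
  qed
qed

end


theorem lemma2:
  fixes V :: "'a set" and F :: "('a \<times> 'a \<times> 'a) set" and E0 :: "'a set set" and N :: nat
  assumes "oriented_sphere_triangulation V F"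
    and "card V = N + 3"
    and "card (tri_edges F) = 3 * N + 3"
    and "E0 \<subseteq> tri_edges F"
    and "card E0 = 2 * N"
    and "cycle_rooted_spanning_tree V (tri_edges F) (tri_edges F - E0)"
    and "\<exists>vs. is_cycle (tri_edges F - E0) vs \<and> odd (length vs)"
  shows "\<forall>f. bij_betw f {..<2 * N} E0 \<longrightarrow>
           det (mat (2 * N) (2 * N) (\<lambda>(i, j). Eentry F (f i) (f j))) = 1"
proof (intro allI impI)
  fix f assume bf: "bij_betw f {..<2 * N} E0"
  interpret tri V F using assms(1) by (simp add: tri_def)
  define n where "n = 2 * N"
  have bfn: "bij_betw f {..<n} E0" using bf unfolding n_def .
  define a where "a i j = Eentry F (f i) (f j)" for i j
  have matEq: "mat (2 * N) (2 * N) (\<lambda>(i, j). Eentry F (f i) (f j)) = mat n n (\<lambda>(i,j). a i j)"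
    unfolding n_def a_def by simp
  have E0: "E0 \<subseteq> EE" using assms(4) .
  have fE: "f i \<in> E0" if "i < n" for i using bfn that unfolding bij_betw_def by auto
  have injf: "inj_on f {..<n}" using bfn unfolding bij_betw_def by simp
  obtain vs where vs: "is_cycle (EE - E0) vs" "odd (length vs)" using assms(7) by blast
  have sc: "spanning_connected V (EE - E0)" and cE: "card (EE - E0) = card V"
    using assms(6) unfolding cycle_rooted_spanning_tree_def by auto
  have sk: "a j i = - a i j" if "i < n" "j < n" for i j
    unfolding a_def using Eskew[of "f i" "f j"] fE[OF that(1)] E0 by auto
  have nonneg: "det (mat n n (\<lambda>(i,j). a i j)) \<ge> 0" by (rule skew_det_nonneg[OF sk])
  have mi: "modinj p n a" if p: "prime p" for p
    unfolding modinj_def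
  proof (intro allI impI)
    fix x :: "nat \<Rightarrow> int" and j0
    assume hyp: "\<forall>i<n. p dvd (\<Sum>j<n. a i j * x j)" and j0: "j0 < n"
    define X where "X e = (if e \<in> E0 then x (inv_into {..<n} f e) else 0)" for e
    have Xf: "X (f j) = x j" if "j < n" for j
      unfolding X_def using fE[OF that] inv_into_f_f[OF injf] that by simp
    have sumeq: "Emul X (f i) = (\<Sum>j<n. a i j * x j)" for i
    proof -
      have "Emul X (f i) = (\<Sum>e'\<in>EE. Eentry F (f i) e' * X e')" unfolding Emul_def ..
      also have "\<dots> = (\<Sum>e'\<in>E0. Eentry F (f i) e' * X e')"
        by (rule sum.mono_neutral_right[OF finEE E0]) (auto simp: X_def)
      also have "\<dots> = (\<Sum>j<n. Eentry F (f i) (f j) * X (f j))"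
        by (rule sum.reindex_bij_betw[OF bfn, symmetric])
      also have "\<dots> = (\<Sum>j<n. a i j * x j)"
        by (rule sum.cong[OF refl]) (simp add: a_def Xf)
      finally show ?thesis .
    qed
    have h: "p dvd Emul X e" if e: "e \<in> E0" for e
    proof -
      obtain i where i: "i < n" "f i = e" using bfn e unfolding bij_betw_def by auto
      show ?thesis using sumeq[of i] hyp i by simp
    qed
    have X0: "X e = 0" if "e \<notin> E0" for e using that unfolding X_def by simp
    have "\<forall>e\<in>E0. p dvd X e" by (rule kernel[OF E0 cE sc vs(1) vs(2) p X0 h])
    thus "p dvd x j0" using fE[OF j0] Xf[OF j0] by metis
  qed
  have "det (mat n n (\<lambda>(i,j). a i j)) = 1 \<or> det (mat n n (\<lambda>(i,j). a i j)) = -1"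
    by (rule det_int_unit) (rule modinj_det[OF _ mi])
  thus "det (mat (2 * N) (2 * N) (\<lambda>(i, j). Eentry F (f i) (f j))) = 1"
    unfolding matEq using nonneg by auto
qed


end
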